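(* Let $(X,b,m)$ be a connected weighted graph satisfying conditions (B) and (M), let $D\subset X$ be relatively dense and $\Omega:=X\setminus D$. Then $$\lambda_\Omega\ge \frac{1}{\mathrm{Inr}(\Omega)\cdot\mathrm{vol}[\mathrm{Inr}(\Omega)]},\qquad\text{where }\ \mathrm{vol}[s]:=\sup_{x\in X}\mathrm{vol}(B_s(x)).$$
   Context: A weighted graph $(X,b,m)$: $X$ countable, $b:X\times X\to[0,\infty)$ symmetric with $b(x,x)=0$ and $\sum_y b(x,y)<\infty$, $m:X\to(0,\infty)$; $\mathrm{vol}(A):=\sum_{x\in A}m(x)$. Condition (B): $\sup_x\frac{1}{m(x)}\sum_y b(x,y)<\infty$. Condition (M): $\sup_x m(x)<\infty$. On $\ell^2(X,m)$ let $\mathcal{E}(f,g)=\frac12\sum_{x,y}b(x,y)(f(x)-f(y))(\overline{g(x)}-\overline{g(y)})$ (a bounded form). A path is $\gamma=(x_0,\dots,x_k)$ with $b(x_j,x_{j+1})>0$, of length $L(\gamma)=\sum_{j=0}^{k-1}1/b(x_j,x_{j+1})$; connected means any two points are joined by a path; $d(x,y)$ is the infimum of path lengths from $x$ to $y$; $U_r(x):=\{y:d(x,y)<r\}$, $B_r(x):=\{y:d(x,y)\le r\}$. $D$ is relatively dense if $\mathrm{Covr}(D):=\inf\{R>0:\bigcup_{p\in D}B_R(p)=X\}<\infty$. Identify $\ell^2(\Omega,m)$ with $\{f\in\ell^2(X,m):f=0 \text{ on } D\}$; $H_\Omega$ is the selfadjoint operator on $\ell^2(\Omega,m)$ associated with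 the restriction of $\mathcal{E}$ to this space (the Dirichlet Laplacian), and $\lambda_\Omega:=\min\sigma(H_\Omega)$. $\mathrm{Inr}(\Omega):=\sup\{r>0:\exists x\in\Omega \text{ with } U_r(x)\subset\Omega\}$. *)

theory Defs
  imports "HOL-Analysis.Analysis"
begin

text \<open>Weighted graph (X,b,m) with X = UNIV of a countable type.\<close>

definition weighted_graph :: "('a::countable \<Rightarrow> 'a \<Rightarrow> real) \<Rightarrow> ('a \<Rightarrow> real) \<Rightarrow> bool" where
  "weighted_graph b m \<longleftrightarrow>
     (\<forall>x y. 0 \<le> b x y) \<and> (\<forall>x y. b x y = b y x) \<and> (\<forall>x. b x x = 0) \<and>
     (\<forall>x. (\<lambda>y. b x y) summable_on UNIV) \<and> (\<forall>x. 0 < m x)"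

definition condB :: "('a::countable \<Rightarrow> 'a \<Rightarrow> real) \<Rightarrow> ('a \<Rightarrow> real) \<Rightarrow> bool" where
  "condB b m \<longleftrightarrow> bdd_above (range (\<lambda>x. (\<Sum>\<^sub>\<infinity>y. b x y) / m x))"

definition condM :: "('a::countable \<Rightarrow> real) \<Rightarrow> bool" where
  "condM m \<longleftrightarrow> bdd_above (range m)"

definition vol :: "('a \<Rightarrow> real) \<Rightarrow> 'a set \<Rightarrow> real" where
  "vol m A = (\<Sum>\<^sub>\<infinity>x\<in>A. m x)"

definition is_gpath :: "('a \<Rightarrow> 'a \<Rightarrow> real) \<Rightarrow> 'a list \<Rightarrow> bool" where
  "is_gpath b \<gamma> \<longleftrightarrow> \<gamma> \<noteq> [] \<and> (\<forall>j. Suc j < length \<gamma> \<longrightarrow> 0 < b (\<gamma> ! j) (\<gamma> ! Suc j))"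

definition gpath_len :: "('a \<Rightarrow> 'a \<Rightarrow> real) \<Rightarrow> 'a list \<Rightarrow> real" where
  "gpath_len b \<gamma> = (\<Sum>j<length \<gamma> - 1. 1 / b (\<gamma> ! j) (\<gamma> ! Suc j))"

definition gconnected :: "('a \<Rightarrow> 'a \<Rightarrow> real) \<Rightarrow> bool" where
  "gconnected b \<longleftrightarrow> (\<forall>x y. \<exists>\<gamma>. is_gpath b \<gamma> \<and> hd \<gamma> = x \<and> last \<gamma> = y)"

definition gdist :: "('a \<Rightarrow> 'a \<Rightarrow> real) \<Rightarrow> 'a \<Rightarrow> 'a \<Rightarrow> real" where
  "gdist b x y = Inf {gpath_len b \<gamma> | \<gamma>. is_gpath b \<gamma> \<and> hd \<gamma> = x \<and> last \<gamma> = y}"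

definition Uball :: "('a \<Rightarrow> 'a \<Rightarrow> real) \<Rightarrow> 'a \<Rightarrow> real \<Rightarrow> 'a set" where
  "Uball b x r = {y. gdist b x y < r}"

definition Bball :: "('a \<Rightarrow> 'a \<Rightarrow> real) \<Rightarrow> 'a \<Rightarrow> real \<Rightarrow> 'a set" where
  "Bball b x r = {y. gdist b x y \<le> r}"

text \<open>Relatively dense: Covr(D) < \<infinity>, i.e. some R > 0 with the closed R-balls around D covering X.\<close>
definition rel_dense :: "('a \<Rightarrow> 'a \<Rightarrow> real) \<Rightarrow> 'a set \<Rightarrow> bool" where
  "rel_dense b D \<longleftrightarrow> (\<exists>R>0. (\<Union>p\<in>D. Bball b p R) = UNIV)"

definition Inr :: "('a \<Rightarrow> 'a \<Rightarrow> real) \<Rightarrow> 'a set \<Rightarrow> real" where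
  "Inr b \<Omega> = Sup {r. 0 < r \<and> (\<exists>x\<in>\<Omega>. Uball b x r \<subseteq> \<Omega>)}"

definition volsup :: "('a \<Rightarrow> 'a \<Rightarrow> real) \<Rightarrow> ('a \<Rightarrow> real) \<Rightarrow> real \<Rightarrow> real" where
  "volsup b m s = (SUP x. vol m (Bball b x s))"

text \<open>l^2(\<Omega>,m), identified with the functions in l^2(X,m) vanishing outside \<Omega>.\<close>
definition l2 :: "('a \<Rightarrow> real) \<Rightarrow> 'a set \<Rightarrow> ('a \<Rightarrow> complex) set" where
  "l2 m \<Omega> = {f. (\<forall>x. x \<notin> \<Omega> \<longrightarrow> f x = 0) \<and> (\<lambda>x. m x * (cmod (f x))\<^sup>2) summable_on UNIV}"

definition l2_inner :: "('a \<Rightarrow> real) \<Rightarrow> ('a \<Rightarrow> complex) \<Rightarrow> ('a \<Rightarrow> complex) \<Rightarrow> complex" where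
  "l2_inner m f g = (\<Sum>\<^sub>\<infinity>x. complex_of_real (m x) * f x * cnj (g x))"

definition energy :: "('a \<Rightarrow> 'a \<Rightarrow> real) \<Rightarrow> ('a \<Rightarrow> complex) \<Rightarrow> ('a \<Rightarrow> complex) \<Rightarrow> complex" where
  "energy b f g = (1/2) * (\<Sum>\<^sub>\<infinity>(x,y). complex_of_real (b x y) * (f x - f y) * cnj (g x - g y))"

text \<open>The operator associated with the (bounded) form restricted to l^2(\<Omega>,m):
  H f is the unique h in l^2(\<Omega>,m) with E(f,g) = <h,g> for all g in l^2(\<Omega>,m).\<close>
definition dirichlet_op :: "('a \<Rightarrow> 'a \<Rightarrow> real) \<Rightarrow> ('a \<Rightarrow> real) \<Rightarrow> 'a set \<Rightarrow> ('a \<Rightarrow> complex) \<Rightarrow> ('a \<Rightarrow> complex)" where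
  "dirichlet_op b m \<Omega> f = (THE h. h \<in> l2 m \<Omega> \<and> (\<forall>g\<in>l2 m \<Omega>. energy b f g = l2_inner m h g))"

definition dirichlet_spectrum :: "('a \<Rightarrow> 'a \<Rightarrow> real) \<Rightarrow> ('a \<Rightarrow> real) \<Rightarrow> 'a set \<Rightarrow> complex set" where
  "dirichlet_spectrum b m \<Omega> =
     {z. \<not> bij_betw (\<lambda>f x. dirichlet_op b m \<Omega> f x - z * f x) (l2 m \<Omega>) (l2 m \<Omega>)}"

end

theory Submission
  imports Defs
begin


locale wgraph =
  fixes b :: "'a::countable \<Rightarrow> 'a \<Rightarrow> real" and m :: "'a \<Rightarrow> real" and D :: "'a set"
  assumes wg: "weighted_graph b m" and conn: "gconnected b" and cB: "condB b m" and cM: "condM m"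
    and rd: "rel_dense b D"
begin

lemma b_nonneg: "0 \<le> b x y" using wg unfolding weighted_graph_def by auto
lemma b_sym: "b x y = b y x" using wg unfolding weighted_graph_def by auto
lemma b_summ: "(\<lambda>y. b x y) summable_on UNIV" using wg unfolding weighted_graph_def by blast
lemma m_pos: "0 < m x" using wg unfolding weighted_graph_def by auto

definition deg :: "'a \<Rightarrow> real" where "deg x = (\<Sum>\<^sub>\<infinity>y. b x y)"

lemma deg_nonneg: "0 \<le> deg x"
  unfolding deg_def by (simp add: b_nonneg infsum_nonneg)

lemma sum_le_deg: "finite F \<Longrightarrow> sum (b x) F \<le> deg x"
  unfolding deg_def by (rule finite_sum_le_infsum) (auto simp: b_summ b_nonneg)

lemma b_le_deg: "b x y \<le> deg x"
  using sum_le_deg[of "{y}" x] by simp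

definition K :: real where "K = Sup (range (\<lambda>x. deg x / m x))"

lemma deg_div_le: "deg x / m x \<le> K"
  unfolding K_def using cB unfolding condB_def deg_def by (intro cSup_upper) auto

lemma deg_le: "deg x \<le> K * m x"
  using deg_div_le[of x] m_pos[of x] by (simp add: divide_le_eq)

lemma K_nonneg: "0 \<le> K"
  using deg_div_le[of undefined] deg_nonneg[of undefined] m_pos[of undefined] by (smt (verit) divide_nonneg_pos)

definition Mm :: real where "Mm = Sup (range m)"

lemma m_le: "m x \<le> Mm"
  unfolding Mm_def using cM unfolding condM_def by (intro cSup_upper) auto

lemma Mm_pos: "0 < Mm" using m_le[of undefined] m_pos[of undefined] by simp

definition KM :: real where "KM = K * Mm + 1"

lemma KM_pos: "0 < KM"
proof -
  have "0 \<le> K * Mm" using K_nonneg Mm_pos by simp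
  then show ?thesis unfolding KM_def by linarith
qed

lemma b_le_KM: "b x y < KM"
proof -
  have "b x y \<le> K * m x" using b_le_deg deg_le by (rule order_trans)
  also have "\<dots> \<le> K * Mm" using K_nonneg m_le by (simp add: mult_left_mono)
  finally show ?thesis unfolding KM_def by simp
qed

fun pl :: "'a list \<Rightarrow> real" where
  "pl (a # c # r) = 1 / b a c + pl (c # r)"
| "pl _ = 0"

fun ip :: "'a list \<Rightarrow> bool" where
  "ip [] = False"
| "ip [a] = True"
| "ip (a # c # r) = (0 < b a c \<and> ip (c # r))"

lemma pl_nonneg: "0 \<le> pl \<gamma>"
  by (induction \<gamma> rule: pl.induct) (auto simp: b_nonneg)

lemma is_gpath_eq: "is_gpath b \<gamma> = ip \<gamma>"
proof (induction \<gamma> rule: ip.induct)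
  case 1 show ?case by (simp add: is_gpath_def)
next
  case (2 a) show ?case by (simp add: is_gpath_def)
next
  case (3 a c r)
  have "is_gpath b (a#c#r) \<longleftrightarrow> 0 < b a c \<and> is_gpath b (c#r)"
  proof
    assume h: "is_gpath b (a#c#r)"
    have hh: "\<forall>j. Suc j < length (a#c#r) \<longrightarrow> 0 < b ((a#c#r)!j) ((a#c#r)!Suc j)"
      using h unfolding is_gpath_def by blast
    have "0 < b ((a#c#r)!0) ((a#c#r)!Suc 0)" using hh[rule_format, of 0] by simp
    then have "0 < b a c" by simp
    moreover have "is_gpath b (c#r)" unfolding is_gpath_def
    proof (intro conjI allI impI)
      fix j assume "Suc j < length (c#r)"
      then show "0 < b ((c#r)!j) ((c#r)!Suc j)"
        using hh[rule_format, of "Suc j"] by simp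
    qed simp
    ultimately show "0 < b a c \<and> is_gpath b (c#r)" by simp
  next
    assume h: "0 < b a c \<and> is_gpath b (c#r)"
    show "is_gpath b (a#c#r)" unfolding is_gpath_def
    proof (intro conjI allI impI)
      fix j assume j: "Suc j < length (a#c#r)"
      show "0 < b ((a#c#r)!j) ((a#c#r)!Suc j)"
      proof (cases j)
        case 0 then show ?thesis using h by simp
      next
        case (Suc i) then show ?thesis using h j unfolding is_gpath_def by auto
      qed
    qed simp
  qed
  then show ?case using 3 by simp
qed

lemma gpath_len_eq: "gpath_len b \<gamma> = pl \<gamma>"
proof (induction \<gamma> rule: pl.induct)
  case (1 a c r)
  have "gpath_len b (a#c#r) = (\<Sum>j<Suc (length (c#r) - 1). 1 / b ((a#c#r) ! j) ((a#c#r) ! Suc j))"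
    unfolding gpath_len_def by simp
  also have "\<dots> = 1 / b a c + (\<Sum>j<length (c#r) - 1. 1 / b ((c#r) ! j) ((c#r) ! Suc j))"
    by (subst sum.lessThan_Suc_shift) simp
  also have "\<dots> = 1 / b a c + pl (c#r)" using 1 unfolding gpath_len_def by simp
  finally show ?case by simp
qed (auto simp: gpath_len_def)

lemma ip_nonempty: "ip \<gamma> \<Longrightarrow> \<gamma> \<noteq> []" by auto

lemma app_facts:
  assumes "ip \<alpha>" "ip \<beta>" "last \<alpha> = hd \<beta>"
  shows "ip (\<alpha> @ tl \<beta>) \<and> pl (\<alpha> @ tl \<beta>) = pl \<alpha> + pl \<beta>"
  using assms
proof (induction \<alpha> rule: ip.induct)
  case (2 a)
  then have "\<beta> = a # tl \<beta>" by (cases \<beta>) auto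
  then have "[a] @ tl \<beta> = \<beta>" by simp
  then show ?case using 2 by simp
next
  case (3 a c r)
  then have IH: "ip ((c#r) @ tl \<beta>) \<and> pl ((c#r) @ tl \<beta>) = pl (c#r) + pl \<beta>" by auto
  have e: "(a#c#r) @ tl \<beta> = a # c # (r @ tl \<beta>)" by simp
  show ?case unfolding e using IH 3 by auto
qed simp

lemma app_split:
  assumes "ip (\<alpha> @ tl \<beta>)" "\<alpha> \<noteq> []" "\<beta> \<noteq> []" "last \<alpha> = hd \<beta>"
  shows "ip \<alpha> \<and> ip \<beta>"
  using assms
proof (induction \<alpha> rule: ip.induct)
  case (2 a)
  then have "\<beta> = a # tl \<beta>" by (cases \<beta>) auto
  then show ?case using 2 by (metis append_Cons append_Nil ip.simps(2))
next
  case (3 a c r)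
  have e: "(a#c#r) @ tl \<beta> = a # c # (r @ tl \<beta>)" by simp
  from 3 have "ip ((c#r) @ tl \<beta>)" "0 < b a c" unfolding e by auto
  with 3 show ?case by auto
qed simp

lemma rev_facts: "ip \<gamma> \<Longrightarrow> ip (rev \<gamma>) \<and> pl (rev \<gamma>) = pl \<gamma>"
proof (induction \<gamma> rule: ip.induct)
  case (3 a c r)
  then have IH: "ip (rev (c#r)) \<and> pl (rev (c#r)) = pl (c#r)" by auto
  have l: "last (rev (c#r)) = hd [c,a]" by simp
  have ipca: "ip [c,a]" using 3 b_sym[of a c] by simp
  have e: "rev (a#c#r) = rev (c#r) @ tl [c,a]" by simp
  show ?case unfolding e using app_facts[OF conjunct1[OF IH] ipca l] IH b_sym[of a c] by simp
qed auto

lemma prefix_path: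
  "ip \<gamma> \<Longrightarrow> u \<in> set \<gamma> \<Longrightarrow> \<exists>\<alpha>. ip \<alpha> \<and> hd \<alpha> = hd \<gamma> \<and> last \<alpha> = u \<and> pl \<alpha> \<le> pl \<gamma>"
proof (induction \<gamma> rule: ip.induct)
  case (2 a) then show ?case by (intro exI[of _ "[a]"]) auto
next
  case (3 a c r)
  show ?case
  proof (cases "u = a")
    case True then show ?thesis using pl_nonneg[of "a#c#r"] by (intro exI[of _ "[a]"]) auto
  next
    case False
    with 3 obtain \<alpha> where \<alpha>: "ip \<alpha>" "hd \<alpha> = c" "last \<alpha> = u" "pl \<alpha> \<le> pl (c#r)" by auto
    then obtain r' where r': "\<alpha> = c # r'" by (cases \<alpha>) auto
    show ?thesis using 3 \<alpha> r' by (intro exI[of _ "a#\<alpha>"]) auto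
  qed
qed auto

lemma pl_pos: "ip \<gamma> \<Longrightarrow> 2 \<le> length \<gamma> \<Longrightarrow> 0 < pl \<gamma>"
proof (induction \<gamma> rule: ip.induct)
  case (3 a c r)
  then have "0 < 1 / b a c" by simp
  then show ?case using pl_nonneg[of "c#r"] by (simp only: pl.simps)
qed auto

lemma len_bound: "ip \<gamma> \<Longrightarrow> real (length \<gamma> - 1) \<le> pl \<gamma> * KM"
proof (induction \<gamma> rule: ip.induct)
  case (3 a c r)
  have "1 \<le> KM / b a c" using b_le_KM[of a c] 3 by simp
  moreover have "real (length (c#r) - 1) \<le> pl (c#r) * KM" using 3 by simp
  ultimately show ?case by (simp add: distrib_right)
qed auto

definition PS :: "'a \<Rightarrow> 'a \<Rightarrow> real set" where
  "PS x y = {pl \<gamma> | \<gamma>. ip \<gamma> \<and> hd \<gamma> = x \<and> last \<gamma> = y}"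

lemma gdist_eq: "gdist b x y = Inf (PS x y)"
  unfolding gdist_def PS_def is_gpath_eq gpath_len_eq ..

lemma PS_ne: "PS x y \<noteq> {}"
  using conn unfolding gconnected_def PS_def is_gpath_eq by blast

lemma PS_bdd: "bdd_below (PS x y)"
  unfolding PS_def using pl_nonneg by (intro bdd_belowI[of _ 0]) auto

lemma gd_le: "ip \<gamma> \<Longrightarrow> gdist b (hd \<gamma>) (last \<gamma>) \<le> pl \<gamma>"
  unfolding gdist_eq by (rule cInf_lower[OF _ PS_bdd]) (auto simp: PS_def)

lemma gd_nonneg: "0 \<le> gdist b x y"
  unfolding gdist_eq by (rule cInf_greatest[OF PS_ne]) (auto simp: PS_def pl_nonneg)

lemma gd_ex: "gdist b x y < s \<Longrightarrow> \<exists>\<gamma>. ip \<gamma> \<and> hd \<gamma> = x \<and> last \<gamma> = y \<and> pl \<gamma> < s"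
  unfolding gdist_eq using cInf_lessD[OF PS_ne] unfolding PS_def by fastforce

lemma PS_sym: "PS x y = PS y x"
proof -
  have "PS x y \<subseteq> PS y x" for x y
  proof
    fix t assume "t \<in> PS x y"
    then obtain \<gamma> where g: "ip \<gamma>" "hd \<gamma> = x" "last \<gamma> = y" "t = pl \<gamma>" unfolding PS_def by blast
    then have "\<gamma> \<noteq> []" by auto
    then have "hd (rev \<gamma>) = y" "last (rev \<gamma>) = x" using g by (auto simp: hd_rev last_rev)
    then show "t \<in> PS y x" unfolding PS_def using rev_facts[OF g(1)] g(4) by (intro CollectI exI[of _ "rev \<gamma>"]) auto
  qed
  then show ?thesis by blast
qed

lemma gd_sym: "gdist b x y = gdist b y x"
  by (metis gdist_eq PS_sym)

subsection \<open>Finiteness\<close>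

definition Nbr :: "real \<Rightarrow> 'a \<Rightarrow> 'a set" where "Nbr T u = {y. 1 / T \<le> b u y}"

lemma Nbr_fin: assumes "0 < T" shows "finite (Nbr T u) \<and> real (card (Nbr T u)) \<le> K * Mm * T"
proof -
  have *: "real (card F) \<le> deg u * T" if "finite F" "F \<subseteq> Nbr T u" for F
  proof -
    have "real (card F) * (1 / T) = (\<Sum>y\<in>F. 1 / T)" by simp
    also have "\<dots> \<le> sum (b u) F" using that by (intro sum_mono) (auto simp: Nbr_def)
    also have "\<dots> \<le> deg u" using sum_le_deg that by blast
    finally show ?thesis using assms by (simp add: field_simps)
  qed
  have fin: "finite (Nbr T u)"
  proof (rule ccontr)
    assume "infinite (Nbr T u)"
    then obtain F where "finite F" "card F = Suc (nat \<lceil>deg u * T\<rceil>)" "F \<subseteq> Nbr T u"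
      using infinite_arbitrarily_large by blast
    with *[of F] show False by linarith
  qed
  have "deg u * T \<le> K * Mm * T"
  proof -
    have "K * m u \<le> K * Mm" using m_le[of u] K_nonneg by (rule mult_left_mono)
    then have "deg u \<le> K * Mm" using deg_le[of u] by linarith
    then show ?thesis using assms by (simp add: mult_right_mono)
  qed
  with *[OF fin] fin show ?thesis by simp
qed

fun reach :: "real \<Rightarrow> nat \<Rightarrow> 'a \<Rightarrow> 'a set" where
  "reach T 0 x = {x}"
| "reach T (Suc k) x = insert x (\<Union>c\<in>Nbr T x. reach T k c)"

lemma reach_self: "x \<in> reach T k x" by (cases k) auto

lemma reach_fin: "0 < T \<Longrightarrow> finite (reach T k x)"
  by (induction k arbitrary: x) (auto simp: Nbr_fin)

lemma reach_card: assumes "0 < T" shows "real (card (reach T k x)) \<le> (1 + K * Mm * T) ^ k"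
proof (induction k arbitrary: x)
  case 0 then show ?case by simp
next
  case (Suc k)
  let ?q = "K * Mm * T"
  have q: "0 \<le> ?q" using K_nonneg Mm_pos assms by simp
  let ?U = "\<Union>c\<in>Nbr T x. reach T k c"
  have h1: "real (card (reach T (Suc k) x)) \<le> 1 + real (card ?U)"
  proof -
    have "finite ?U" using Nbr_fin[OF assms] reach_fin[OF assms] by auto
    then have "card (insert x ?U) \<le> Suc (card ?U)"
      by (simp add: card_insert_if)
    then show ?thesis by simp
  qed
  have "card ?U \<le> (\<Sum>c\<in>Nbr T x. card (reach T k c))"
    by (rule card_UN_le[OF conjunct1[OF Nbr_fin[OF assms]]])
  then have "real (card ?U) \<le> (\<Sum>c\<in>Nbr T x. real (card (reach T k c)))"
    unfolding of_nat_sum[symmetric] of_nat_le_iff .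
  also have "\<dots> \<le> (\<Sum>c\<in>Nbr T x. (1 + ?q) ^ k)" by (intro sum_mono Suc.IH)
  also have "\<dots> = real (card (Nbr T x)) * (1 + ?q) ^ k" by simp
  also have "\<dots> \<le> ?q * (1 + ?q) ^ k" using Nbr_fin[OF assms, of x] q by (intro mult_right_mono) auto
  finally have "real (card ?U) \<le> ?q * (1 + ?q) ^ k" .
  with h1 have "real (card (reach T (Suc k) x)) \<le> 1 + ?q * (1 + ?q) ^ k" by linarith
  also have "\<dots> \<le> (1 + ?q) ^ Suc k"
  proof -
    have "1 \<le> (1 + ?q) ^ k" using q by (simp add: one_le_power)
    then show ?thesis by (simp add: distrib_right)
  qed
  finally show ?case .
qed

lemma path_in_reach:
  "0 < T \<Longrightarrow> ip \<gamma> \<Longrightarrow> pl \<gamma> \<le> T \<Longrightarrow> length \<gamma> \<le> Suc k \<Longrightarrow> set \<gamma> \<subseteq> reach T k (hd \<gamma>)"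
proof (induction \<gamma> arbitrary: k rule: ip.induct)
  case (2 a) then show ?case using reach_self by auto
next
  case (3 a c r)
  then obtain k' where k: "k = Suc k'" by (cases k) auto
  have "1 / b a c \<le> T" using 3 pl_nonneg[of "c#r"] by simp
  then have "1 / T \<le> b a c" using 3 by (simp add: field_simps)
  then have cN: "c \<in> Nbr T a" unfolding Nbr_def by simp
  have "0 \<le> 1 / b a c" using b_nonneg[of a c] by simp
  then have "pl (c#r) \<le> T" using 3(4) by (simp only: pl.simps)
  moreover have "length (c#r) \<le> Suc k'" using 3(5) k by simp
  ultimately have "set (c#r) \<subseteq> reach T k' (hd (c#r))" using 3(1)[of k'] 3(2,3) by simp
  then have "set (c#r) \<subseteq> reach T k' c" by simp
  then show ?case using cN k by auto
qed auto

definition kT :: "real \<Rightarrow> nat" where "kT T = nat \<lfloor>T * KM\<rfloor>"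

lemma length_kT: "ip \<gamma> \<Longrightarrow> pl \<gamma> \<le> T \<Longrightarrow> length \<gamma> \<le> Suc (kT T)"
proof -
  assume a: "ip \<gamma>" "pl \<gamma> \<le> T"
  have "real (length \<gamma> - 1) \<le> T * KM" using len_bound[OF a(1)] a(2) KM_pos by (smt (verit) mult_right_mono)
  then have "length \<gamma> - 1 \<le> kT T" unfolding kT_def by linarith
  then show ?thesis by simp
qed

lemma paths_fin: "0 < T \<Longrightarrow> finite {\<gamma>. ip \<gamma> \<and> hd \<gamma> = x \<and> pl \<gamma> \<le> T}"
proof -
  assume T: "0 < T"
  have "{\<gamma>. ip \<gamma> \<and> hd \<gamma> = x \<and> pl \<gamma> \<le> T} \<subseteq> {xs. set xs \<subseteq> reach T (kT T) x \<and> length xs \<le> Suc (kT T)}"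
    using path_in_reach[OF T] length_kT by blast
  then show ?thesis using finite_lists_length_le[OF reach_fin[OF T]] finite_subset by blast
qed

definition kB :: "real \<Rightarrow> real" where "kB s = (1 + K * Mm * (max s 0 + 1)) ^ kT (max s 0 + 1)"

lemma ball_reach: "Bball b x s \<subseteq> reach (max s 0 + 1) (kT (max s 0 + 1)) x"
proof
  fix y assume "y \<in> Bball b x s"
  then have "gdist b x y < max s 0 + 1" unfolding Bball_def by simp
  then obtain \<gamma> where g: "ip \<gamma>" "hd \<gamma> = x" "last \<gamma> = y" "pl \<gamma> < max s 0 + 1" using gd_ex by blast
  then have "set \<gamma> \<subseteq> reach (max s 0 + 1) (kT (max s 0 + 1)) x"
  proof -
    have "length \<gamma> \<le> Suc (kT (max s 0 + 1))" using length_kT[of \<gamma>] g by simp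
    then show ?thesis using path_in_reach[of "max s 0 + 1" \<gamma> "kT (max s 0 + 1)"] g by simp
  qed
  moreover have "y \<in> set \<gamma>" using g ip_nonempty[OF g(1)] last_in_set by blast
  ultimately show "y \<in> reach (max s 0 + 1) (kT (max s 0 + 1)) x" by blast
qed

lemma ball_fin: "finite (Bball b x s)"
proof -
  have T: "0 < max s 0 + 1" by simp
  show ?thesis using ball_reach reach_fin[OF T] by (rule finite_subset)
qed

lemma vol_ball: "vol m (Bball b x s) = sum m (Bball b x s)"
  unfolding vol_def using ball_fin by simp

lemma vol_ball_le: "vol m (Bball b x s) \<le> kB s * Mm"
proof -
  have T: "0 < max s 0 + 1" by simp
  have "vol m (Bball b x s) \<le> (\<Sum>y\<in>Bball b x s. Mm)" unfolding vol_ball by (intro sum_mono m_le)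
  also have "\<dots> = real (card (Bball b x s)) * Mm" by simp
  also have "\<dots> \<le> real (card (reach (max s 0 + 1) (kT (max s 0 + 1)) x)) * Mm"
    using card_mono[OF reach_fin[OF T] ball_reach] Mm_pos by simp
  also have "\<dots> \<le> kB s * Mm" unfolding kB_def using reach_card[OF T] Mm_pos by (intro mult_right_mono) auto
  finally show ?thesis .
qed

lemma volsup_bdd: "bdd_above (range (\<lambda>x. vol m (Bball b x s)))"
  using vol_ball_le by (intro bdd_aboveI) auto

lemma vol_le_volsup: "vol m (Bball b x s) \<le> volsup b m s"
  unfolding volsup_def using volsup_bdd by (intro cSup_upper) auto

subsection \<open>Inradius and shortest paths to D\<close>

definition Rd :: real where "Rd = (SOME R. 0 < R \<and> (\<Union>p\<in>D. Bball b p R) = UNIV)"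

lemma Rd: "0 < Rd \<and> (\<Union>p\<in>D. Bball b p Rd) = UNIV"
  unfolding Rd_def using rd unfolding rel_dense_def by (rule someI_ex)

lemma Rd_cov: "\<exists>p\<in>D. gdist b x p \<le> Rd"
proof -
  have "x \<in> (\<Union>p\<in>D. Bball b p Rd)" using Rd by simp
  then show ?thesis unfolding Bball_def using gd_sym by auto
qed

definition InrSet :: "real set" where "InrSet = {r. 0 < r \<and> (\<exists>x\<in>- D. Uball b x r \<subseteq> - D)}"

lemma Inr_eq: "Inr b (- D) = Sup InrSet" unfolding Inr_def InrSet_def ..

lemma InrSet_bdd: "bdd_above InrSet"
proof (rule bdd_aboveI[of _ Rd])
  fix r assume "r \<in> InrSet"
  then obtain x where x: "x \<notin> D" "Uball b x r \<subseteq> - D" unfolding InrSet_def by auto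
  obtain p where p: "p \<in> D" "gdist b x p \<le> Rd" using Rd_cov by blast
  show "r \<le> Rd"
  proof (rule ccontr)
    assume "\<not> r \<le> Rd"
    then have "p \<in> Uball b x r" using p unfolding Uball_def by simp
    then show False using x p by auto
  qed
qed

definition Px :: "'a \<Rightarrow> 'a list set" where
  "Px x = {\<gamma>. ip \<gamma> \<and> hd \<gamma> = x \<and> last \<gamma> \<in> D \<and> pl \<gamma> \<le> Rd + 1}"

lemma Px_fin: "finite (Px x)"
proof -
  have "Px x \<subseteq> {\<gamma>. ip \<gamma> \<and> hd \<gamma> = x \<and> pl \<gamma> \<le> Rd + 1}" unfolding Px_def by auto
  moreover have "0 < Rd + 1" using Rd by simp
  ultimately show ?thesis using paths_fin finite_subset by blast
qed

lemma Px_ne: "Px x \<noteq> {}"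
proof -
  obtain p where p: "p \<in> D" "gdist b x p \<le> Rd" using Rd_cov by blast
  then have "gdist b x p < Rd + 1" by simp
  then obtain \<gamma> where "ip \<gamma>" "hd \<gamma> = x" "last \<gamma> = p" "pl \<gamma> < Rd + 1" using gd_ex by blast
  then have "\<gamma> \<in> Px x" unfolding Px_def using p by auto
  then show ?thesis by blast
qed

definition gam :: "'a \<Rightarrow> 'a list" where
  "gam x = (SOME \<gamma>. \<gamma> \<in> Px x \<and> (\<forall>\<gamma>'\<in>Px x. pl \<gamma> \<le> pl \<gamma>'))"

lemma gam_ex: "\<exists>\<gamma>. \<gamma> \<in> Px x \<and> (\<forall>\<gamma>'\<in>Px x. pl \<gamma> \<le> pl \<gamma>')"
proof -
  have "Min (pl ` Px x) \<in> pl ` Px x" using Px_fin Px_ne by (intro Min_in) auto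
  then obtain \<gamma> where "\<gamma> \<in> Px x" "pl \<gamma> = Min (pl ` Px x)" by auto
  moreover have "\<forall>\<gamma>'\<in>Px x. Min (pl ` Px x) \<le> pl \<gamma>'" using Px_fin by auto
  ultimately show ?thesis by auto
qed

lemma gam_in: "gam x \<in> Px x" and gam_min0: "\<gamma>' \<in> Px x \<Longrightarrow> pl (gam x) \<le> pl \<gamma>'"
  using someI_ex[OF gam_ex[of x]] unfolding gam_def[symmetric] by auto

lemma gam_ip: "ip (gam x)" and gam_hd: "hd (gam x) = x" and gam_last: "last (gam x) \<in> D"
  using gam_in[of x] unfolding Px_def by auto

lemma gam_min: "ip \<gamma>' \<Longrightarrow> hd \<gamma>' = x \<Longrightarrow> last \<gamma>' \<in> D \<Longrightarrow> pl (gam x) \<le> pl \<gamma>'"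
proof -
  assume a: "ip \<gamma>'" "hd \<gamma>' = x" "last \<gamma>' \<in> D"
  have "pl (gam x) \<le> Rd + 1" using gam_in[of x] unfolding Px_def by auto
  then show ?thesis using gam_min0[of \<gamma>' x] a unfolding Px_def by force
qed

lemma gam_distinct: "distinct (gam x)"
proof (rule ccontr)
  assume "\<not> distinct (gam x)"
  then obtain xs ys zs y where e: "gam x = xs @ [y] @ ys @ [y] @ zs" using not_distinct_decomp by blast
  define \<alpha> where "\<alpha> = xs @ [y]"
  define \<beta>1 where "\<beta>1 = y # ys @ [y]"
  define \<beta>2 where "\<beta>2 = y # zs"
  have e1: "gam x = \<alpha> @ tl (\<beta>1 @ tl \<beta>2)" unfolding e \<alpha>_def \<beta>1_def \<beta>2_def by simp
  have l1: "last \<alpha> = hd (\<beta>1 @ tl \<beta>2)" unfolding \<alpha>_def \<beta>1_def by simp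
  have "ip \<alpha> \<and> ip (\<beta>1 @ tl \<beta>2)" using app_split[of \<alpha> "\<beta>1 @ tl \<beta>2"] gam_ip[of x] e1 l1
    unfolding \<alpha>_def \<beta>1_def by simp
  then have ipa: "ip \<alpha>" and ipb: "ip (\<beta>1 @ tl \<beta>2)" by auto
  have l2: "last \<beta>1 = hd \<beta>2" unfolding \<beta>1_def \<beta>2_def by simp
  have "ip \<beta>1 \<and> ip \<beta>2" using app_split[OF ipb] l2 unfolding \<beta>1_def \<beta>2_def by simp
  then have ipb1: "ip \<beta>1" and ipb2: "ip \<beta>2" by auto
  have plb: "pl (\<beta>1 @ tl \<beta>2) = pl \<beta>1 + pl \<beta>2" using app_facts[OF ipb1 ipb2 l2] by simp
  have plg: "pl (gam x) = pl \<alpha> + pl (\<beta>1 @ tl \<beta>2)" using app_facts[OF ipa ipb l1] e1 by simp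
  have l3: "last \<alpha> = hd \<beta>2" unfolding \<alpha>_def \<beta>2_def by simp
  have new: "ip (\<alpha> @ tl \<beta>2) \<and> pl (\<alpha> @ tl \<beta>2) = pl \<alpha> + pl \<beta>2" using app_facts[OF ipa ipb2 l3] .
  have "hd (\<alpha> @ tl \<beta>2) = x" using gam_hd[of x] unfolding e \<alpha>_def by (cases xs) auto
  moreover have "last (\<alpha> @ tl \<beta>2) = last (gam x)" unfolding e \<alpha>_def \<beta>2_def by (cases zs) auto
  ultimately have "pl (gam x) \<le> pl (\<alpha> @ tl \<beta>2)" using gam_min new gam_last by metis
  moreover have "0 < pl \<beta>1" using pl_pos[OF ipb1] unfolding \<beta>1_def by simp
  ultimately show False using new plb plg by simp
qed

lemma gam_len2: "x \<notin> D \<Longrightarrow> 2 \<le> length (gam x)"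
proof (rule ccontr)
  assume a: "x \<notin> D" "\<not> 2 \<le> length (gam x)"
  have "gam x \<noteq> []" using gam_ip[of x] by auto
  then obtain y rest where yr: "gam x = y # rest" by (cases "gam x") auto
  then have "rest = []" using a by (cases rest) auto
  then have "gam x = [y]" using yr by simp
  then show False using gam_hd[of x] gam_last[of x] a by simp
qed

lemma gam_Inr: assumes "x \<notin> D" shows "pl (gam x) \<le> Inr b (- D)"
proof -
  have pos: "0 < pl (gam x)" using pl_pos[OF gam_ip gam_len2[OF assms]] .
  have "Uball b x (pl (gam x)) \<subseteq> - D"
  proof
    fix y assume "y \<in> Uball b x (pl (gam x))"
    then have "gdist b x y < pl (gam x)" unfolding Uball_def by simp
    then obtain \<gamma> where g: "ip \<gamma>" "hd \<gamma> = x" "last \<gamma> = y" "pl \<gamma> < pl (gam x)" using gd_ex by blast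
    show "y \<in> - D"
    proof
      assume "y \<in> D"
      then show False using gam_min[OF g(1,2)] g by force
    qed
  qed
  then have "pl (gam x) \<in> InrSet" unfolding InrSet_def using pos assms by auto
  then show ?thesis unfolding Inr_eq using InrSet_bdd by (rule cSup_upper)
qed

lemma gam_near: "u \<in> set (gam x) \<Longrightarrow> gdist b u x \<le> pl (gam x)"
proof -
  assume "u \<in> set (gam x)"
  then obtain \<alpha> where a: "ip \<alpha>" "hd \<alpha> = x" "last \<alpha> = u" "pl \<alpha> \<le> pl (gam x)"
    using prefix_path[OF gam_ip] gam_hd by metis
  have "gdist b x u \<le> pl \<alpha>" using gd_le[OF a(1)] a by simp
  then show ?thesis using a gd_sym by simp
qed

fun edges :: "'a list \<Rightarrow> ('a \<times> 'a) list" where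
  "edges (a # c # r) = (a, c) # edges (c # r)"
| "edges _ = []"

lemma pl_edges: "pl \<gamma> = sum_list (map (\<lambda>(u,v). 1 / b u v) (edges \<gamma>))"
  by (induction \<gamma> rule: edges.induct) auto

lemma tele_edges: "\<gamma> \<noteq> [] \<Longrightarrow> (f (hd \<gamma>) - f (last \<gamma>) :: 'b::ab_group_add) = sum_list (map (\<lambda>(u,v). f u - f v) (edges \<gamma>))"
proof (induction \<gamma> rule: edges.induct)
  case (1 a c r)
  have "f (hd (a#c#r)) - f (last (a#c#r)) = (f a - f c) + (f (hd (c#r)) - f (last (c#r)))" by simp
  also have "\<dots> = (f a - f c) + sum_list (map (\<lambda>(u,v). f u - f v) (edges (c#r)))" using 1 by simp
  finally show ?case by simp
qed auto

lemma edges_set: "(u,v) \<in> set (edges \<gamma>) \<Longrightarrow> u \<in> set \<gamma> \<and> v \<in> set \<gamma>"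
  by (induction \<gamma> rule: edges.induct) auto

lemma edges_snd: "(u,v) \<in> set (edges (c # r)) \<Longrightarrow> v \<in> set r"
  by (induction "c # r" arbitrary: c r rule: edges.induct) auto

lemma edges_pos: "ip \<gamma> \<Longrightarrow> (u,v) \<in> set (edges \<gamma>) \<Longrightarrow> 0 < b u v"
  by (induction \<gamma> rule: ip.induct) auto

lemma edges_distinct: "distinct \<gamma> \<Longrightarrow> distinct (edges \<gamma>)"
  by (induction \<gamma> rule: edges.induct) (auto dest: edges_set)

lemma edges_antisym: "distinct \<gamma> \<Longrightarrow> (u,v) \<in> set (edges \<gamma>) \<Longrightarrow> (v,u) \<notin> set (edges \<gamma>)"
proof (induction \<gamma> arbitrary: u v rule: edges.induct)
  case (1 a c r)
  have na: "a \<notin> set (c # r)" using 1 by simp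
  have "(c, a) \<notin> set (edges (c # r))" using edges_snd[of c a c r] na by auto
  then show ?case using 1 by auto
qed auto

lemma CS_list:
  fixes w a :: "'b \<Rightarrow> real"
  assumes "\<forall>e\<in>set es. 0 < w e" "distinct es"
  shows "(sum_list (map a es))\<^sup>2 \<le> sum_list (map (\<lambda>e. 1 / w e) es) * sum_list (map (\<lambda>e. w e * (a e)\<^sup>2) es)"
proof -
  let ?A = "set es"
  have "(\<Sum>e\<in>?A. a e)\<^sup>2 = (\<Sum>e\<in>?A. (1 / sqrt (w e)) * (sqrt (w e) * a e))\<^sup>2"
    using assms(1) by (intro arg_cong[where f="\<lambda>t. t\<^sup>2"] sum.cong) (auto simp: field_simps)
  also have "\<dots> \<le> (\<Sum>e\<in>?A. (1 / sqrt (w e))\<^sup>2) * (\<Sum>e\<in>?A. (sqrt (w e) * a e)\<^sup>2)"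
    by (rule Cauchy_Schwarz_ineq_sum)
  also have "\<dots> = (\<Sum>e\<in>?A. 1 / w e) * (\<Sum>e\<in>?A. w e * (a e)\<^sup>2)"
    using assms(1) by (intro arg_cong2[where f="(*)"] sum.cong) (auto simp: power_mult_distrib power_divide)
  finally show ?thesis using assms(2) by (simp add: sum_list_distinct_conv_sum_set)
qed

subsection \<open>Pointwise and finite Poincare estimates\<close>

abbreviation EE :: "'a \<Rightarrow> ('a \<times> 'a) set" where "EE x \<equiv> set (edges (gam x))"

definition cc :: "('a \<Rightarrow> complex) \<Rightarrow> 'a \<times> 'a \<Rightarrow> real" where
  "cc f e = b (fst e) (snd e) * (cmod (f (fst e) - f (snd e)))\<^sup>2"

lemma cc_nonneg: "0 \<le> cc f e" unfolding cc_def using b_nonneg by simp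

lemma cc_swap: "cc f (prod.swap e) = cc f e"
  unfolding cc_def by (simp add: b_sym norm_minus_commute)

lemma poinc_pt:
  assumes f0: "\<And>y. y \<in> D \<Longrightarrow> f y = 0" and x: "x \<notin> D"
  shows "(cmod (f x))\<^sup>2 \<le> Inr b (- D) * (\<Sum>e\<in>EE x. cc f e)"
proof -
  let ?g = "gam x"
  have ne: "?g \<noteq> []" using gam_ip[of x] by auto
  have dist: "distinct (edges ?g)" using edges_distinct[OF gam_distinct] .
  have "f x = f (hd ?g) - f (last ?g)" using gam_hd[of x] f0[OF gam_last[of x]] by simp
  also have "\<dots> = sum_list (map (\<lambda>(u,v). f u - f v) (edges ?g))" by (rule tele_edges[OF ne])
  also have "\<dots> = (\<Sum>e\<in>EE x. f (fst e) - f (snd e))"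
    using dist by (simp add: sum_list_distinct_conv_sum_set case_prod_beta)
  finally have "cmod (f x) \<le> (\<Sum>e\<in>EE x. cmod (f (fst e) - f (snd e)))"
    by (metis norm_sum)
  then have "(cmod (f x))\<^sup>2 \<le> (\<Sum>e\<in>EE x. cmod (f (fst e) - f (snd e)))\<^sup>2"
    by (simp add: power_mono)
  also have "\<dots> = (sum_list (map (\<lambda>e. cmod (f (fst e) - f (snd e))) (edges ?g)))\<^sup>2"
    using dist by (simp add: sum_list_distinct_conv_sum_set)
  also have "\<dots> \<le> sum_list (map (\<lambda>e. 1 / b (fst e) (snd e)) (edges ?g)) *
       sum_list (map (\<lambda>e. b (fst e) (snd e) * (cmod (f (fst e) - f (snd e)))\<^sup>2) (edges ?g))"
    using edges_pos[OF gam_ip] dist by (intro CS_list) auto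
  also have "\<dots> = pl ?g * (\<Sum>e\<in>EE x. cc f e)"
    using dist by (simp add: sum_list_distinct_conv_sum_set pl_edges cc_def case_prod_beta)
  also have "\<dots> \<le> Inr b (- D) * (\<Sum>e\<in>EE x. cc f e)"
    using gam_Inr[OF x] by (intro mult_right_mono sum_nonneg cc_nonneg) auto
  finally show ?thesis .
qed

lemma poinc_fin:
  assumes f0: "\<And>y. y \<in> D \<Longrightarrow> f y = 0" and F: "finite F" "F \<subseteq> - D"
  shows "\<exists>G. finite G \<and> (\<Sum>x\<in>F. m x * (cmod (f x))\<^sup>2) \<le>
           Inr b (- D) * (volsup b m (Inr b (- D)) / 2) * (\<Sum>e\<in>G. cc f e)"
proof (cases "F = {}")
  case True then show ?thesis by (intro exI[of _ "{}"]) auto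
next
  case False
  then obtain x0 where "x0 \<in> F" by auto
  then have x0D: "x0 \<notin> D" using F by auto
  have "0 < pl (gam x0)" using pl_pos[OF gam_ip gam_len2[OF x0D]] .
  then have Inr_pos: "0 < Inr b (- D)" using gam_Inr[OF x0D] by linarith
  let ?I = "Inr b (- D)" and ?V = "volsup b m (Inr b (- D))"
  define G where "G = (\<Union>x\<in>F. EE x)"
  define G2 where "G2 = G \<union> prod.swap ` G"
  have finG2: "finite G2" unfolding G2_def G_def using F by auto
  have EEG2: "x \<in> F \<Longrightarrow> EE x \<subseteq> G2" for x unfolding G2_def G_def by auto
  define w where "w e = (\<Sum>x\<in>F. if e \<in> EE x then m x else 0)" for e
  have "(\<Sum>x\<in>F. m x * (cmod (f x))\<^sup>2) \<le> (\<Sum>x\<in>F. m x * (?I * (\<Sum>e\<in>EE x. cc f e)))"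
    using F m_pos by (intro sum_mono mult_left_mono poinc_pt[OF f0]) (auto intro: less_imp_le)
  also have "\<dots> = ?I * (\<Sum>x\<in>F. \<Sum>e\<in>EE x. m x * cc f e)"
    by (simp add: sum_distrib_left mult_ac)
  finally have s0: "(\<Sum>x\<in>F. m x * (cmod (f x))\<^sup>2) \<le> ?I * (\<Sum>x\<in>F. \<Sum>e\<in>EE x. m x * cc f e)" .
  have "(\<Sum>x\<in>F. \<Sum>e\<in>EE x. m x * cc f e) = (\<Sum>x\<in>F. \<Sum>e\<in>G2. if e \<in> EE x then m x * cc f e else 0)"
  proof (rule sum.cong[OF refl])
    fix x assume "x \<in> F"
    then have "G2 \<inter> EE x = EE x" using EEG2 by auto
    then show "(\<Sum>e\<in>EE x. m x * cc f e) = (\<Sum>e\<in>G2. if e \<in> EE x then m x * cc f e else 0)"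
      using sum.inter_restrict[OF finG2, of "\<lambda>e. m x * cc f e" "EE x"] by simp
  qed
  also have "\<dots> = (\<Sum>e\<in>G2. \<Sum>x\<in>F. if e \<in> EE x then m x * cc f e else 0)" by (rule sum.swap)
  also have "\<dots> = (\<Sum>e\<in>G2. cc f e * w e)"
    unfolding w_def by (rule sum.cong[OF refl]) (simp add: sum_distrib_left, rule sum.cong, auto)
  finally have step1: "(\<Sum>x\<in>F. m x * (cmod (f x))\<^sup>2) \<le> ?I * (\<Sum>e\<in>G2. cc f e * w e)" using s0 by simp
  have sw1: "prod.swap e \<in> G2" if "e \<in> G2" for e using that unfolding G2_def by auto
  have swapG2: "prod.swap ` G2 = G2"
  proof
    show "prod.swap ` G2 \<subseteq> G2" using sw1 by auto
    show "G2 \<subseteq> prod.swap ` G2"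
    proof
      fix e assume "e \<in> G2"
      then show "e \<in> prod.swap ` G2" using sw1 by (intro image_eqI[of _ _ "prod.swap e"]) auto
    qed
  qed
  have "(\<Sum>e\<in>G2. cc f e * w e) = (\<Sum>e\<in>prod.swap ` G2. cc f e * w e)" using swapG2 by simp
  also have "\<dots> = (\<Sum>e\<in>G2. cc f (prod.swap e) * w (prod.swap e))"
    by (subst sum.reindex) (auto simp: inj_on_def)
  also have "\<dots> = (\<Sum>e\<in>G2. cc f e * w (prod.swap e))" by (simp add: cc_swap)
  finally have sw: "(\<Sum>e\<in>G2. cc f e * w e) = (\<Sum>e\<in>G2. cc f e * w (prod.swap e))" .
  have wsum: "w e + w (prod.swap e) \<le> ?V" for e
  proof -
    let ?B = "Bball b (fst e) ?I"
    have "w e + w (prod.swap e) = (\<Sum>x\<in>F. (if e \<in> EE x then m x else 0) + (if prod.swap e \<in> EE x then m x else 0))"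
      unfolding w_def by (simp add: sum.distrib)
    also have "\<dots> \<le> (\<Sum>x\<in>F. if x \<in> ?B then m x else 0)"
    proof (intro sum_mono)
      fix x assume xF: "x \<in> F"
      then have xD: "x \<notin> D" using F by auto
      show "(if e \<in> EE x then m x else 0) + (if prod.swap e \<in> EE x then m x else 0) \<le> (if x \<in> ?B then m x else 0)"
      proof (cases "e \<in> EE x \<or> prod.swap e \<in> EE x")
        case True
        then have "fst e \<in> set (gam x)" using edges_set[of "fst e" "snd e" "gam x"] edges_set[of "snd e" "fst e" "gam x"]
          by (cases e) auto
        then have "gdist b (fst e) x \<le> ?I" using gam_near gam_Inr[OF xD] by (meson order_trans)
        then have xB: "x \<in> ?B" unfolding Bball_def by simp
        have "\<not> (e \<in> EE x \<and> prod.swap e \<in> EE x)"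
          using edges_antisym[OF gam_distinct, of "fst e" "snd e" x] by (cases e) auto
        then show ?thesis using xB True m_pos[of x] by auto
      next
        case False then show ?thesis using m_pos[of x] by auto
      qed
    qed
    also have "\<dots> = (\<Sum>x\<in>F \<inter> ?B. m x)" using sum.inter_restrict[OF F(1), of m ?B] by simp
    also have "\<dots> \<le> sum m ?B" using m_pos ball_fin by (intro sum_mono2) (auto intro: less_imp_le)
    also have "\<dots> \<le> ?V" using vol_le_volsup[of "fst e" ?I] by (simp add: vol_ball)
    finally show ?thesis .
  qed
  have "2 * (\<Sum>e\<in>G2. cc f e * w e) = (\<Sum>e\<in>G2. cc f e * (w e + w (prod.swap e)))"
    using sw by (simp add: sum.distrib distrib_left)
  also have "\<dots> \<le> (\<Sum>e\<in>G2. cc f e * ?V)" by (intro sum_mono mult_left_mono wsum cc_nonneg)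
  also have "(\<Sum>e\<in>G2. cc f e * ?V) = ?V * (\<Sum>e\<in>G2. cc f e)" by (simp add: sum_distrib_right mult_ac)
  finally have "(\<Sum>e\<in>G2. cc f e * w e) \<le> ?V / 2 * (\<Sum>e\<in>G2. cc f e)"
    by linarith
  with step1 Inr_pos have "(\<Sum>x\<in>F. m x * (cmod (f x))\<^sup>2) \<le> ?I * (?V / 2 * (\<Sum>e\<in>G2. cc f e))"
    by (smt (verit) mult_left_mono)
  then show ?thesis using finG2 by (intro exI[of _ G2]) (simp add: mult_ac)
qed

end



definition sqs :: "('a \<Rightarrow> complex) \<Rightarrow> bool" where
  "sqs f \<longleftrightarrow> (\<lambda>x. (cmod (f x))\<^sup>2) summable_on UNIV"

lemma sqs_0[simp]: "sqs (\<lambda>_. 0)" unfolding sqs_def by simp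

lemma sq_add_le: "(cmod (a + b))\<^sup>2 \<le> 2 * (cmod a)\<^sup>2 + 2 * (cmod b)\<^sup>2"
proof -
  have "cmod (a + b) \<le> cmod a + cmod b" by (rule norm_triangle_ineq)
  then have "(cmod (a + b))\<^sup>2 \<le> (cmod a + cmod b)\<^sup>2" by (simp add: power_mono)
  also have "\<dots> \<le> 2 * (cmod a)\<^sup>2 + 2 * (cmod b)\<^sup>2"
  proof -
    have "0 \<le> (cmod a - cmod b)\<^sup>2" by simp
    then show ?thesis by (simp add: power2_diff power2_sum)
  qed
  finally show ?thesis .
qed

lemma sqs_add: "sqs f \<Longrightarrow> sqs g \<Longrightarrow> sqs (\<lambda>x. f x + g x)"
  unfolding sqs_def
  by (rule summable_on_comparison_test[of "\<lambda>x. 2 * (cmod (f x))\<^sup>2 + 2 * (cmod (g x))\<^sup>2"])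
     (auto intro!: summable_on_add summable_on_cmult_right simp: sq_add_le)

lemma sqs_uminus: "sqs f \<Longrightarrow> sqs (\<lambda>x. - f x)" unfolding sqs_def by simp

lemma sqs_diff: "sqs f \<Longrightarrow> sqs g \<Longrightarrow> sqs (\<lambda>x. f x - g x)"
  using sqs_add[of f "\<lambda>x. - g x"] sqs_uminus[of g] by simp

lemma sqs_mult: "sqs f \<Longrightarrow> sqs (\<lambda>x. c * f x)"
  unfolding sqs_def by (simp add: norm_mult power_mult_distrib summable_on_cmult_right)

lemma prod_le_sq: "cmod (a * cnj b) \<le> (cmod a)\<^sup>2 + (cmod b)\<^sup>2"
proof -
  have "cmod (a * cnj b) = cmod a * cmod b" by (simp add: norm_mult)
  also have "\<dots> \<le> (cmod a)\<^sup>2 + (cmod b)\<^sup>2"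
  proof -
    have "0 \<le> (cmod a - cmod b)\<^sup>2" by simp
    then have "2 * (cmod a * cmod b) \<le> (cmod a)\<^sup>2 + (cmod b)\<^sup>2" by (simp add: power2_diff)
    moreover have "0 \<le> cmod a * cmod b" by simp
    ultimately show ?thesis by linarith
  qed
  finally show ?thesis .
qed

lemma sqs_inner: "sqs f \<Longrightarrow> sqs g \<Longrightarrow> (\<lambda>x. f x * cnj (g x)) summable_on UNIV"
proof -
  assume "sqs f" "sqs g"
  then have "(\<lambda>x. norm (f x * cnj (g x))) summable_on UNIV" unfolding sqs_def
    by (intro Infinite_Sum.abs_summable_on_comparison_test'[where g="\<lambda>x. (cmod (f x))\<^sup>2 + (cmod (g x))\<^sup>2"])
     (auto intro!: summable_on_add simp: prod_le_sq)
  then show ?thesis by (rule Infinite_Sum.abs_summable_summable)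
qed

lemma mcnj_fun: "(\<lambda>x. f x * cnj (f x)) = (\<lambda>x. complex_of_real ((cmod (f x))\<^sup>2))"
  by (simp only: complex_norm_square)

typedef 'a ell2 = "{f::'a \<Rightarrow> complex. sqs f}" morphisms rep Abs_ell2
  by (intro exI[of _ "\<lambda>_. 0"]) simp

setup_lifting type_definition_ell2

instantiation ell2 :: (type) real_vector
begin
lift_definition zero_ell2 :: "'a ell2" is "\<lambda>_. 0" by simp
lift_definition plus_ell2 :: "'a ell2 \<Rightarrow> 'a ell2 \<Rightarrow> 'a ell2" is "\<lambda>f g x. f x + g x" by (rule sqs_add)
lift_definition uminus_ell2 :: "'a ell2 \<Rightarrow> 'a ell2" is "\<lambda>f x. - f x" by (rule sqs_uminus)
lift_definition minus_ell2 :: "'a ell2 \<Rightarrow> 'a ell2 \<Rightarrow> 'a ell2" is "\<lambda>f g x. f x - g x" by (rule sqs_diff)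
lift_definition scaleR_ell2 :: "real \<Rightarrow> 'a ell2 \<Rightarrow> 'a ell2" is "\<lambda>r f x. complex_of_real r * f x" by (rule sqs_mult)
instance
  by standard (transfer; auto simp: algebra_simps)+
end

lemma rep_inner_summ: "(\<lambda>x. rep u x * cnj (rep v x)) summable_on UNIV"
  using rep[of u] rep[of v] by (auto intro: sqs_inner)

instantiation ell2 :: (type) real_inner
begin
lift_definition inner_ell2 :: "'a ell2 \<Rightarrow> 'a ell2 \<Rightarrow> real" is "\<lambda>f g. Re (\<Sum>\<^sub>\<infinity>x. f x * cnj (g x))" .
definition norm_ell2 :: "'a ell2 \<Rightarrow> real" where "norm_ell2 u = sqrt (inner u u)"
definition sgn_ell2 :: "'a ell2 \<Rightarrow> 'a ell2" where "sgn_ell2 u = u /\<^sub>R norm u"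
definition dist_ell2 :: "'a ell2 \<Rightarrow> 'a ell2 \<Rightarrow> real" where "dist_ell2 u v = norm (u - v)"
definition uniformity_ell2 :: "('a ell2 \<times> 'a ell2) filter" where
  "uniformity_ell2 = (INF e\<in>{0<..}. principal {(x, y). dist x y < e})"
definition open_ell2 :: "'a ell2 set \<Rightarrow> bool" where
  "open_ell2 U = (\<forall>x\<in>U. \<forall>\<^sub>F (x', y) in uniformity. x' = x \<longrightarrow> y \<in> U)"
instance
proof
  fix r :: real and x y z :: "'a ell2" and U :: "'a ell2 set"
  show "dist x y = norm (x - y)" by (simp add: dist_ell2_def)
  show "sgn x = x /\<^sub>R norm x" by (simp add: sgn_ell2_def)
  show "uniformity = (INF e\<in>{0<..}. principal {(x, y :: 'a ell2). dist x y < e})" by (simp add: uniformity_ell2_def)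
  show "open U = (\<forall>x\<in>U. \<forall>\<^sub>F (x', y) in uniformity. x' = x \<longrightarrow> y \<in> U)" by (simp add: open_ell2_def)
  show "norm x = sqrt (inner x x)" by (simp add: norm_ell2_def)
  show "inner x y = inner y x"
  proof (transfer)
    fix f g :: "'a \<Rightarrow> complex"
    have "(\<Sum>\<^sub>\<infinity>x. g x * cnj (f x)) = cnj (\<Sum>\<^sub>\<infinity>x. f x * cnj (g x))"
      by (subst infsum_cnj[symmetric]) (simp add: mult.commute)
    then show "Re (\<Sum>\<^sub>\<infinity>x. f x * cnj (g x)) = Re (\<Sum>\<^sub>\<infinity>x. g x * cnj (f x))" by simp
  qed
  show "inner (x + y) z = inner x z + inner y z"
  proof (transfer)
    fix f g h :: "'a \<Rightarrow> complex" assume "sqs f" "sqs g" "sqs h"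
    then have "(\<Sum>\<^sub>\<infinity>x. (f x + g x) * cnj (h x)) = (\<Sum>\<^sub>\<infinity>x. f x * cnj (h x)) + (\<Sum>\<^sub>\<infinity>x. g x * cnj (h x))"
      by (simp add: distrib_right infsum_add sqs_inner)
    then show "Re (\<Sum>\<^sub>\<infinity>x. (f x + g x) * cnj (h x)) = Re (\<Sum>\<^sub>\<infinity>x. f x * cnj (h x)) + Re (\<Sum>\<^sub>\<infinity>x. g x * cnj (h x))"
      by simp
  qed
  show "inner (r *\<^sub>R x) y = r * inner x y"
  proof (transfer)
    fix f g :: "'a \<Rightarrow> complex" and r :: real
    have "(\<Sum>\<^sub>\<infinity>x. complex_of_real r * f x * cnj (g x)) = complex_of_real r * (\<Sum>\<^sub>\<infinity>x. f x * cnj (g x))"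
      by (simp add: mult.assoc infsum_cmult_right')
    then show "Re (\<Sum>\<^sub>\<infinity>x. complex_of_real r * f x * cnj (g x)) = r * Re (\<Sum>\<^sub>\<infinity>x. f x * cnj (g x))" by simp
  qed
  have sq: "(\<Sum>\<^sub>\<infinity>x. f x * cnj (f x)) = complex_of_real (\<Sum>\<^sub>\<infinity>x. (cmod (f x))\<^sup>2)" if "sqs f" for f :: "'a \<Rightarrow> complex"
  proof -
    have "((\<lambda>x. (cmod (f x))\<^sup>2) has_sum (\<Sum>\<^sub>\<infinity>x. (cmod (f x))\<^sup>2)) UNIV" using that unfolding sqs_def by simp
    then have "((\<lambda>x. complex_of_real ((cmod (f x))\<^sup>2)) has_sum complex_of_real (\<Sum>\<^sub>\<infinity>x. (cmod (f x))\<^sup>2)) UNIV"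
      by (rule has_sum_of_real)
    then show ?thesis by (simp only: mcnj_fun infsumI)
  qed
  show "0 \<le> inner x x"
    by transfer (simp add: sq infsum_nonneg)
  show "(inner x x = 0) = (x = 0)"
  proof (transfer)
    fix f :: "'a \<Rightarrow> complex" assume f: "sqs f"
    show "(Re (\<Sum>\<^sub>\<infinity>x. f x * cnj (f x)) = 0) = (f = (\<lambda>_. 0))"
    proof
      assume "Re (\<Sum>\<^sub>\<infinity>x. f x * cnj (f x)) = 0"
      then have "(\<Sum>\<^sub>\<infinity>x. (cmod (f x))\<^sup>2) = 0" using sq[OF f] by simp
      then have "\<forall>x. (cmod (f x))\<^sup>2 = 0"
        using nonneg_infsum_le_0D[of "\<lambda>x. (cmod (f x))\<^sup>2" UNIV] f unfolding sqs_def by auto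
      then show "f = (\<lambda>_. 0)" by auto
    qed simp
  qed
qed
end

lemma rep_diff: "rep (u - v) x = rep u x - rep v x" by transfer simp
lemma rep_add: "rep (u + v) x = rep u x + rep v x" by transfer simp
lemma rep_scaleR: "rep (r *\<^sub>R u) x = complex_of_real r * rep u x" by transfer simp

lemma norm_ell2_sq: "(norm u)\<^sup>2 = (\<Sum>\<^sub>\<infinity>x. (cmod (rep u x))\<^sup>2)"
proof -
  have s: "sqs (rep u)" using rep[of u] by simp
  have "(\<Sum>\<^sub>\<infinity>x. rep u x * cnj (rep u x)) = complex_of_real (\<Sum>\<^sub>\<infinity>x. (cmod (rep u x))\<^sup>2)"
  proof -
    have "((\<lambda>x. (cmod (rep u x))\<^sup>2) has_sum (\<Sum>\<^sub>\<infinity>x. (cmod (rep u x))\<^sup>2)) UNIV" using s unfolding sqs_def by simp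
    then have "((\<lambda>x. complex_of_real ((cmod (rep u x))\<^sup>2)) has_sum complex_of_real (\<Sum>\<^sub>\<infinity>x. (cmod (rep u x))\<^sup>2)) UNIV"
      by (rule has_sum_of_real)
    then show ?thesis by (simp only: mcnj_fun infsumI)
  qed
  then have "inner u u = (\<Sum>\<^sub>\<infinity>x. (cmod (rep u x))\<^sup>2)" by transfer simp
  then show ?thesis by (simp add: power2_norm_eq_inner)
qed

lemma rep_le_norm: "cmod (rep u x) \<le> norm u"
proof -
  have "(cmod (rep u x))\<^sup>2 \<le> (\<Sum>\<^sub>\<infinity>y. (cmod (rep u y))\<^sup>2)"
    using finite_sum_le_infsum[of "\<lambda>y. (cmod (rep u y))\<^sup>2" UNIV "{x}"] rep[of u] unfolding sqs_def by simp
  then have "(cmod (rep u x))\<^sup>2 \<le> (norm u)\<^sup>2" by (simp add: norm_ell2_sq)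
  then show ?thesis using power2_le_imp_le by fastforce
qed

instance ell2 :: (type) complete_space
proof
  fix X :: "nat \<Rightarrow> 'a ell2" assume X: "Cauchy X"
  have cx: "Cauchy (\<lambda>n. rep (X n) x)" for x
  proof (rule metric_CauchyI)
    fix e :: real assume "0 < e"
    then obtain M where M: "\<forall>m\<ge>M. \<forall>n\<ge>M. dist (X m) (X n) < e" using metric_CauchyD[OF X] by blast
    have "dist (rep (X m) x) (rep (X n) x) < e" if "m \<ge> M" "n \<ge> M" for m n
    proof -
      have "dist (rep (X m) x) (rep (X n) x) = cmod (rep (X m - X n) x)" by (simp add: dist_norm rep_diff)
      also have "\<dots> \<le> norm (X m - X n)" by (rule rep_le_norm)
      also have "\<dots> < e" using M that by (simp add: dist_norm)
      finally show ?thesis .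
    qed
    then show "\<exists>M. \<forall>m\<ge>M. \<forall>n\<ge>M. dist (rep (X m) x) (rep (X n) x) < e" by blast
  qed
  define L where "L x = lim (\<lambda>n. rep (X n) x)" for x
  have Lx: "(\<lambda>n. rep (X n) x) \<longlonglongrightarrow> L x" for x
    unfolding L_def using cx[of x] by (simp add: Cauchy_convergent_iff convergent_LIMSEQ_iff)
  have main: "sqs (\<lambda>x. L x - rep (X n) x) \<and> (\<Sum>\<^sub>\<infinity>x. (cmod (L x - rep (X n) x))\<^sup>2) \<le> e\<^sup>2"
    if M: "\<forall>m\<ge>M. \<forall>n\<ge>M. dist (X m) (X n) < e" and n: "n \<ge> M" and e: "0 < e" for n M e
  proof -
    have fin: "(\<Sum>x\<in>F. (cmod (L x - rep (X n) x))\<^sup>2) \<le> e\<^sup>2" if F: "finite F" for F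
    proof -
      have lim: "(\<lambda>k. \<Sum>x\<in>F. (cmod (rep (X k) x - rep (X n) x))\<^sup>2) \<longlonglongrightarrow> (\<Sum>x\<in>F. (cmod (L x - rep (X n) x))\<^sup>2)"
        by (intro tendsto_intros Lx)
      have "(\<Sum>x\<in>F. (cmod (rep (X k) x - rep (X n) x))\<^sup>2) \<le> e\<^sup>2" if k: "k \<ge> M" for k
      proof -
        have "(\<Sum>x\<in>F. (cmod (rep (X k) x - rep (X n) x))\<^sup>2) = (\<Sum>x\<in>F. (cmod (rep (X k - X n) x))\<^sup>2)"
          by (simp add: rep_diff)
        also have "\<dots> \<le> (\<Sum>\<^sub>\<infinity>x. (cmod (rep (X k - X n) x))\<^sup>2)"
          using rep[of "X k - X n"] F unfolding sqs_def by (intro finite_sum_le_infsum) auto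
        also have "\<dots> = (norm (X k - X n))\<^sup>2" by (simp add: norm_ell2_sq)
        also have "\<dots> \<le> e\<^sup>2" using M k n by (intro power_mono) (auto simp: dist_norm less_imp_le)
        finally show ?thesis .
      qed
      then have "\<forall>\<^sub>F k in sequentially. (\<Sum>x\<in>F. (cmod (rep (X k) x - rep (X n) x))\<^sup>2) \<le> e\<^sup>2"
        by (auto simp: eventually_sequentially)
      with lim show ?thesis by (rule tendsto_upperbound) simp
    qed
    have "sqs (\<lambda>x. L x - rep (X n) x)" unfolding sqs_def
      by (rule nonneg_bdd_above_summable_on) (auto intro!: bdd_aboveI[of _ "e\<^sup>2"] fin)
    moreover have "(\<Sum>\<^sub>\<infinity>x. (cmod (L x - rep (X n) x))\<^sup>2) \<le> e\<^sup>2"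
      using calculation unfolding sqs_def by (rule infsum_le_finite_sums) (auto intro: fin)
    ultimately show ?thesis by simp
  qed
  obtain M1 where M1: "\<forall>m\<ge>M1. \<forall>n\<ge>M1. dist (X m) (X n) < 1" using metric_CauchyD[OF X, of 1] by auto
  have "sqs L"
  proof -
    have "sqs (\<lambda>x. (L x - rep (X M1) x) + rep (X M1) x)"
      using main[OF M1 order_refl] rep[of "X M1"] by (intro sqs_add) auto
    then show ?thesis by simp
  qed
  define Lu where "Lu = Abs_ell2 L"
  have repLu: "rep Lu = L" unfolding Lu_def using \<open>sqs L\<close> by (simp add: Abs_ell2_inverse)
  have "X \<longlonglongrightarrow> Lu"
  proof (rule metric_LIMSEQ_I)
    fix r :: real assume r: "0 < r"
    then obtain M where M: "\<forall>m\<ge>M. \<forall>n\<ge>M. dist (X m) (X n) < r / 2" using metric_CauchyD[OF X, of "r/2"] by auto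
    have "dist (X n) Lu < r" if n: "n \<ge> M" for n
    proof -
      have "(norm (Lu - X n))\<^sup>2 = (\<Sum>\<^sub>\<infinity>x. (cmod (L x - rep (X n) x))\<^sup>2)" by (simp add: norm_ell2_sq rep_diff repLu)
      also have "\<dots> \<le> (r/2)\<^sup>2" using main[OF M n] r by simp
      finally have sq: "(norm (Lu - X n))\<^sup>2 \<le> (r/2)\<^sup>2" .
      have "norm (Lu - X n) \<le> r / 2" using sq by (rule power2_le_imp_le) (use r in simp)
      then show ?thesis using r by (simp add: dist_norm norm_minus_commute)
    qed
    then show "\<exists>no. \<forall>n\<ge>no. dist (X n) Lu < r" by blast
  qed
  then show "convergent X" by (auto simp: convergent_def)
qed




lemma summable_on_diff':
  fixes f g :: "'a \<Rightarrow> 'b::{topological_ab_group_add}"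
  shows "f summable_on A \<Longrightarrow> g summable_on A \<Longrightarrow> (\<lambda>x. f x - g x) summable_on A"
  using summable_on_add[of f A "\<lambda>x. - g x"] summable_on_uminus[of g A] by simp

lemma infsum_diff':
  fixes f g :: "'a \<Rightarrow> 'b::{topological_ab_group_add, t2_space}"
  shows "f summable_on A \<Longrightarrow> g summable_on A \<Longrightarrow> (\<Sum>\<^sub>\<infinity>x\<in>A. f x - g x) = infsum f A - infsum g A"
  using infsum_add[of f A "\<lambda>x. - g x"] summable_on_uminus[of g A] infsum_uminus[of g A] by simp

lemma abs_summ_complex:
  fixes f :: "'a \<Rightarrow> complex"
  assumes "g summable_on A" "\<And>x. x \<in> A \<Longrightarrow> cmod (f x) \<le> g x"
  shows "f summable_on A"
proof -
  have "(\<lambda>x. norm (f x)) summable_on A" using assms by (rule Infinite_Sum.abs_summable_on_comparison_test')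
  then show ?thesis by (rule Infinite_Sum.abs_summable_summable)
qed

lemma summ_cmp:
  fixes f g :: "'a \<Rightarrow> real"
  assumes "g summable_on A" "\<And>x. x \<in> A \<Longrightarrow> f x \<le> g x" "\<And>x. x \<in> A \<Longrightarrow> 0 \<le> f x"
  shows "f summable_on A"
  using summable_on_comparison_test[OF assms] .

lemma mul_le_sq: "(a::real) \<ge> 0 \<Longrightarrow> c \<ge> 0 \<Longrightarrow> a * c \<le> a\<^sup>2 + c\<^sup>2"
proof -
  assume "a \<ge> 0" "c \<ge> 0"
  have "0 \<le> (a - c)\<^sup>2" by simp
  then have "2 * (a * c) \<le> a\<^sup>2 + c\<^sup>2" by (simp add: power2_diff)
  moreover have "0 \<le> a * c" using \<open>a \<ge> 0\<close> \<open>c \<ge> 0\<close> by simp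
  ultimately show ?thesis by linarith
qed

lemma univ_pair: "(UNIV :: ('a \<times> 'b) set) = Sigma UNIV (\<lambda>_. UNIV)" by simp

context wgraph
begin

abbreviation L2 where "L2 \<equiv> l2 m (- D)"

definition NN :: "('a \<Rightarrow> complex) \<Rightarrow> real" where "NN f = (\<Sum>\<^sub>\<infinity>x. m x * (cmod (f x))\<^sup>2)"

lemma L2_D: "f \<in> L2 \<Longrightarrow> x \<in> D \<Longrightarrow> f x = 0" unfolding l2_def by auto
lemma L2_summ: "f \<in> L2 \<Longrightarrow> (\<lambda>x. m x * (cmod (f x))\<^sup>2) summable_on UNIV" unfolding l2_def by auto
lemma L2I: "(\<And>x. x \<in> D \<Longrightarrow> f x = 0) \<Longrightarrow> (\<lambda>x. m x * (cmod (f x))\<^sup>2) summable_on UNIV \<Longrightarrow> f \<in> L2"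
  unfolding l2_def by auto

lemma m_nonneg: "0 \<le> m x" using m_pos[of x] by simp

lemma m_sq_add: "m x * (cmod (a + c))\<^sup>2 \<le> 2 * (m x * (cmod a)\<^sup>2) + 2 * (m x * (cmod c)\<^sup>2)"
proof -
  have "m x * (cmod (a + c))\<^sup>2 \<le> m x * (2 * (cmod a)\<^sup>2 + 2 * (cmod c)\<^sup>2)"
    by (rule mult_left_mono[OF sq_add_le m_nonneg])
  then show ?thesis by (simp add: algebra_simps)
qed

lemma m_sq_diff: "m x * (cmod (a - c))\<^sup>2 \<le> 2 * (m x * (cmod a)\<^sup>2) + 2 * (m x * (cmod c)\<^sup>2)"
  using m_sq_add[of x a "- c"] by simp

lemma NN_nonneg: "0 \<le> NN f" unfolding NN_def using m_nonneg by (intro infsum_nonneg) simp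

lemma L2_add: "f \<in> L2 \<Longrightarrow> g \<in> L2 \<Longrightarrow> (\<lambda>x. f x + g x) \<in> L2"
proof (rule L2I)
  assume f: "f \<in> L2" and g: "g \<in> L2"
  show "(\<lambda>x. f x + g x) x = 0" if "x \<in> D" for x using that f g by (simp add: L2_D)
  show "(\<lambda>x. m x * (cmod (f x + g x))\<^sup>2) summable_on UNIV"
    by (rule summ_cmp[of "\<lambda>x. 2 * (m x * (cmod (f x))\<^sup>2) + 2 * (m x * (cmod (g x))\<^sup>2)"])
       (auto intro!: summable_on_add summable_on_cmult_right L2_summ f g m_sq_add simp: m_nonneg)
qed

lemma sq_scale: "m x * (cmod (c * a))\<^sup>2 = (cmod c)\<^sup>2 * (m x * (cmod a)\<^sup>2)"
  by (simp add: norm_mult power_mult_distrib)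

lemma L2_mult: "f \<in> L2 \<Longrightarrow> (\<lambda>x. c * f x) \<in> L2"
  by (rule L2I) (auto simp: L2_D sq_scale intro!: summable_on_cmult_right L2_summ)

lemma L2_diff: "f \<in> L2 \<Longrightarrow> g \<in> L2 \<Longrightarrow> (\<lambda>x. f x - g x) \<in> L2"
  using L2_add[of f "\<lambda>x. (-1) * g x"] L2_mult[of g "-1"] by simp

lemma L2_zero: "(\<lambda>_. 0) \<in> L2" by (rule L2I) auto

lemma NN_diff_le: "f \<in> L2 \<Longrightarrow> g \<in> L2 \<Longrightarrow> NN (\<lambda>x. f x - g x) \<le> 2 * NN f + 2 * NN g"
proof -
  assume f: "f \<in> L2" and g: "g \<in> L2"
  have "NN (\<lambda>x. f x - g x) \<le> (\<Sum>\<^sub>\<infinity>x. 2 * (m x * (cmod (f x))\<^sup>2) + 2 * (m x * (cmod (g x))\<^sup>2))"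
    unfolding NN_def
  proof (rule infsum_mono)
    show "(\<lambda>x. m x * (cmod (f x - g x))\<^sup>2) summable_on UNIV" using L2_summ[OF L2_diff[OF f g]] .
    show "(\<lambda>x. 2 * (m x * (cmod (f x))\<^sup>2) + 2 * (m x * (cmod (g x))\<^sup>2)) summable_on UNIV"
      by (intro summable_on_add summable_on_cmult_right L2_summ f g)
    fix x
    show "m x * (cmod (f x - g x))\<^sup>2 \<le> 2 * (m x * (cmod (f x))\<^sup>2) + 2 * (m x * (cmod (g x))\<^sup>2)"
      by (rule m_sq_diff)
  qed
  also have "\<dots> = 2 * NN f + 2 * NN g" unfolding NN_def
    by (simp add: infsum_add summable_on_cmult_right L2_summ f g infsum_cmult_right')
  finally show ?thesis .
qed

lemma NN_mult: "NN (\<lambda>x. c * f x) = (cmod c)\<^sup>2 * NN f"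
  unfolding NN_def sq_scale by (rule infsum_cmult_right')

lemma NN_zero_imp: "f \<in> L2 \<Longrightarrow> NN f \<le> 0 \<Longrightarrow> f = (\<lambda>_. 0)"
proof -
  assume f: "f \<in> L2" "NN f \<le> 0"
  have "\<forall>x. m x * (cmod (f x))\<^sup>2 = 0"
    using nonneg_infsum_le_0D[of "\<lambda>x. m x * (cmod (f x))\<^sup>2" UNIV] f L2_summ m_nonneg unfolding NN_def by auto
  show ?thesis
  proof
    fix x
    have "m x * (cmod (f x))\<^sup>2 = 0" using \<open>\<forall>x. m x * (cmod (f x))\<^sup>2 = 0\<close> by simp
    then show "f x = 0" using m_pos[of x] by simp
  qed
qed

lemma b_le_Km: "b x y \<le> K * m y"
  using b_sym[of x y] b_le_deg[of y x] deg_le[of y] by simp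

lemma bsq: assumes f: "f \<in> L2"
  shows "(\<lambda>y. b x y * (cmod (f y))\<^sup>2) summable_on UNIV \<and> (\<Sum>\<^sub>\<infinity>y. b x y * (cmod (f y))\<^sup>2) \<le> K * NN f"
proof -
  have le: "b x y * (cmod (f y))\<^sup>2 \<le> K * (m y * (cmod (f y))\<^sup>2)" for y
    using b_le_Km[of x y] by (simp add: mult_right_mono mult.assoc[symmetric])
  have s: "(\<lambda>y. K * (m y * (cmod (f y))\<^sup>2)) summable_on UNIV" by (intro summable_on_cmult_right L2_summ f)
  have s2: "(\<lambda>y. b x y * (cmod (f y))\<^sup>2) summable_on UNIV"
    by (rule summ_cmp[OF s le]) (simp add: b_nonneg)
  have "(\<Sum>\<^sub>\<infinity>y. b x y * (cmod (f y))\<^sup>2) \<le> (\<Sum>\<^sub>\<infinity>y. K * (m y * (cmod (f y))\<^sup>2))"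
    by (rule infsum_mono[OF s2 s le])
  also have "\<dots> = K * NN f" unfolding NN_def by (rule infsum_cmult_right')
  finally show ?thesis using s2 by simp
qed

lemma degsq: assumes f: "f \<in> L2"
  shows "(\<lambda>x. deg x * (cmod (f x))\<^sup>2) summable_on UNIV \<and> (\<Sum>\<^sub>\<infinity>x. deg x * (cmod (f x))\<^sup>2) \<le> K * NN f"
proof -
  have le: "deg x * (cmod (f x))\<^sup>2 \<le> K * (m x * (cmod (f x))\<^sup>2)" for x
    using deg_le[of x] by (simp add: mult_right_mono mult.assoc[symmetric])
  have s: "(\<lambda>y. K * (m y * (cmod (f y))\<^sup>2)) summable_on UNIV" by (intro summable_on_cmult_right L2_summ f)
  have s2: "(\<lambda>x. deg x * (cmod (f x))\<^sup>2) summable_on UNIV"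
    by (rule summ_cmp[OF s le]) (simp add: deg_nonneg)
  have "(\<Sum>\<^sub>\<infinity>x. deg x * (cmod (f x))\<^sup>2) \<le> (\<Sum>\<^sub>\<infinity>y. K * (m y * (cmod (f y))\<^sup>2))"
    by (rule infsum_mono[OF s2 s le])
  also have "\<dots> = K * NN f" unfolding NN_def by (rule infsum_cmult_right')
  finally show ?thesis using s2 by simp
qed

lemma hs_b: "((\<lambda>y. b x y * c) has_sum (deg x * c)) UNIV"
  unfolding deg_def by (rule has_sum_cmult_left) (simp add: b_summ)

lemma prod1: assumes f: "f \<in> L2"
  shows "(\<lambda>(x,y). b x y * (cmod (f x))\<^sup>2) summable_on UNIV"
proof -
  have "(\<lambda>(x,y). b x y * (cmod (f x))\<^sup>2) summable_on Sigma UNIV (\<lambda>_. UNIV)"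
  proof (rule summable_on_SigmaI[where g="\<lambda>x. deg x * (cmod (f x))\<^sup>2"])
    show "((\<lambda>y. case (x, y) of (x, y) \<Rightarrow> b x y * (cmod (f x))\<^sup>2) has_sum deg x * (cmod (f x))\<^sup>2) UNIV" for x
      using hs_b by simp
    show "(\<lambda>x. deg x * (cmod (f x))\<^sup>2) summable_on UNIV" using degsq[OF f] by simp
  qed (auto simp: b_nonneg)
  then show ?thesis by simp
qed

lemma prod2: assumes f: "f \<in> L2"
  shows "(\<lambda>(x,y). b x y * (cmod (f y))\<^sup>2) summable_on UNIV"
proof -
  have "(\<lambda>(x,y). b x y * (cmod (f x))\<^sup>2) summable_on (UNIV \<times> UNIV)" using prod1[OF f] by simp
  then have "(\<lambda>(x,y). (\<lambda>(x,y). b x y * (cmod (f x))\<^sup>2) (y,x)) summable_on (UNIV \<times> UNIV)"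
    using summable_on_swap by blast
  then show ?thesis by (simp add: b_sym)
qed

definition Q :: "('a \<Rightarrow> complex) \<Rightarrow> real" where "Q f = (\<Sum>\<^sub>\<infinity>e. cc f e)"

lemma cc_le: "cc f (x,y) \<le> 2 * (b x y * (cmod (f x))\<^sup>2) + 2 * (b x y * (cmod (f y))\<^sup>2)"
proof -
  have "(cmod (f x - f y))\<^sup>2 \<le> 2 * (cmod (f x))\<^sup>2 + 2 * (cmod (- f y))\<^sup>2" using sq_add_le[of "f x" "- f y"] by simp
  then have "b x y * (cmod (f x - f y))\<^sup>2 \<le> b x y * (2 * (cmod (f x))\<^sup>2 + 2 * (cmod (f y))\<^sup>2)"
    by (simp add: mult_left_mono b_nonneg)
  then show ?thesis unfolding cc_def by (simp add: algebra_simps)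
qed

lemma cc_summ: assumes f: "f \<in> L2" shows "cc f summable_on UNIV"
proof -
  have s: "(\<lambda>e. 2 * (case e of (x,y) \<Rightarrow> b x y * (cmod (f x))\<^sup>2) + 2 * (case e of (x,y) \<Rightarrow> b x y * (cmod (f y))\<^sup>2)) summable_on UNIV"
    by (intro summable_on_add summable_on_cmult_right prod1 prod2 f)
  show ?thesis
  proof (rule summ_cmp[OF s])
    fix e show "cc f e \<le> 2 * (case e of (x,y) \<Rightarrow> b x y * (cmod (f x))\<^sup>2) + 2 * (case e of (x,y) \<Rightarrow> b x y * (cmod (f y))\<^sup>2)"
      by (cases e) (simp add: cc_le)
  qed (rule cc_nonneg)
qed

lemma Q_nonneg: "0 \<le> Q f" unfolding Q_def using cc_nonneg by (intro infsum_nonneg) auto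

lemma Q_bound: assumes f: "f \<in> L2" shows "Q f \<le> 4 * K * NN f"
proof -
  have s1: "(\<lambda>(x,y). b x y * (cmod (f x))\<^sup>2) summable_on Sigma UNIV (\<lambda>_. UNIV)" using prod1[OF f] by simp
  have i1: "(\<Sum>\<^sub>\<infinity>(x,y). b x y * (cmod (f x))\<^sup>2) = (\<Sum>\<^sub>\<infinity>x. deg x * (cmod (f x))\<^sup>2)"
  proof -
    have "(\<Sum>\<^sub>\<infinity>(x,y)\<in>Sigma UNIV (\<lambda>_. UNIV). b x y * (cmod (f x))\<^sup>2) = (\<Sum>\<^sub>\<infinity>x. \<Sum>\<^sub>\<infinity>y. b x y * (cmod (f x))\<^sup>2)"
      using infsum_Sigma_banach[OF s1] by simp
    also have "\<dots> = (\<Sum>\<^sub>\<infinity>x. deg x * (cmod (f x))\<^sup>2)"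
      by (rule infsum_cong) (rule infsumI[OF hs_b])
    finally show ?thesis by simp
  qed
  have i2: "(\<Sum>\<^sub>\<infinity>(x,y). b x y * (cmod (f y))\<^sup>2) = (\<Sum>\<^sub>\<infinity>(x,y). b x y * (cmod (f x))\<^sup>2)"
  proof -
    have "(\<Sum>\<^sub>\<infinity>(x,y). b x y * (cmod (f y))\<^sup>2) = (\<Sum>\<^sub>\<infinity>(x,y)\<in>prod.swap ` UNIV. b x y * (cmod (f y))\<^sup>2)" by simp
    also have "\<dots> = (\<Sum>\<^sub>\<infinity>e. (\<lambda>(x,y). b x y * (cmod (f y))\<^sup>2) (prod.swap e))"
      by (subst infsum_reindex) (auto simp: o_def)
    also have "\<dots> = (\<Sum>\<^sub>\<infinity>(x,y). b x y * (cmod (f x))\<^sup>2)" by (simp add: case_prod_beta' b_sym)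
    finally show ?thesis .
  qed
  have "Q f \<le> (\<Sum>\<^sub>\<infinity>e. 2 * (case e of (x,y) \<Rightarrow> b x y * (cmod (f x))\<^sup>2) + 2 * (case e of (x,y) \<Rightarrow> b x y * (cmod (f y))\<^sup>2))"
    unfolding Q_def
  proof (rule infsum_mono)
    show "cc f summable_on UNIV" by (rule cc_summ[OF f])
    show "(\<lambda>e. 2 * (case e of (x,y) \<Rightarrow> b x y * (cmod (f x))\<^sup>2) + 2 * (case e of (x,y) \<Rightarrow> b x y * (cmod (f y))\<^sup>2)) summable_on UNIV"
      by (intro summable_on_add summable_on_cmult_right prod1 prod2 f)
    fix e show "cc f e \<le> 2 * (case e of (x,y) \<Rightarrow> b x y * (cmod (f x))\<^sup>2) + 2 * (case e of (x,y) \<Rightarrow> b x y * (cmod (f y))\<^sup>2)"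
      by (cases e) (simp add: cc_le)
  qed
  also have "\<dots> = 2 * (\<Sum>\<^sub>\<infinity>(x,y). b x y * (cmod (f x))\<^sup>2) + 2 * (\<Sum>\<^sub>\<infinity>(x,y). b x y * (cmod (f y))\<^sup>2)"
    by (simp add: infsum_add summable_on_cmult_right prod1 prod2 f infsum_cmult_right')
  also have "\<dots> = 4 * (\<Sum>\<^sub>\<infinity>x. deg x * (cmod (f x))\<^sup>2)" unfolding i2 i1 by simp
  also have "\<dots> \<le> 4 * (K * NN f)" using degsq[OF f] by simp
  finally show ?thesis by simp
qed

abbreviation Ir where "Ir \<equiv> Inr b (- D)"
abbreviation VV where "VV \<equiv> volsup b m (Inr b (- D))"

lemma gd_self: "gdist b x x = 0"
  using gd_le[of "[x]"] gd_nonneg[of x x] by simp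

lemma Ir_pos: "x \<notin> D \<Longrightarrow> 0 < Ir"
  using pl_pos[OF gam_ip gam_len2, of x] gam_Inr[of x] by linarith

lemma VV_pos: assumes "x \<notin> D" shows "0 < VV"
proof -
  have "x \<in> Bball b x Ir" unfolding Bball_def using gd_self Ir_pos[OF assms] by simp
  then have "m x \<le> sum m (Bball b x Ir)" using ball_fin m_nonneg by (intro member_le_sum) auto
  also have "\<dots> \<le> VV" using vol_le_volsup[of x Ir] by (simp add: vol_ball)
  finally show ?thesis using m_pos[of x] by linarith
qed

lemma poinc: assumes f: "f \<in> L2" and x0: "x0 \<notin> D"
  shows "NN f \<le> Ir * (VV / 2) * Q f"
  unfolding NN_def
proof (rule infsum_le_finite_sums)
  show "(\<lambda>x. m x * (cmod (f x))\<^sup>2) summable_on UNIV" by (rule L2_summ[OF f])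
  fix F :: "'a set" assume F: "finite F"
  have f0: "\<And>y. y \<in> D \<Longrightarrow> f y = 0" using L2_D[OF f] .
  have "(\<Sum>x\<in>F. m x * (cmod (f x))\<^sup>2) = (\<Sum>x\<in>F - D. m x * (cmod (f x))\<^sup>2)"
    using F f0 by (intro sum.mono_neutral_right) auto
  also obtain G where G: "finite G" "(\<Sum>x\<in>F - D. m x * (cmod (f x))\<^sup>2) \<le> Ir * (VV / 2) * (\<Sum>e\<in>G. cc f e)"
    using poinc_fin[where f=f and F="F - D"] f0 F by auto
  note G(2)
  also have "Ir * (VV / 2) * (\<Sum>e\<in>G. cc f e) \<le> Ir * (VV / 2) * Q f"
  proof (rule mult_left_mono)
    show "(\<Sum>e\<in>G. cc f e) \<le> Q f" unfolding Q_def using cc_summ[OF f] G(1) cc_nonneg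
      by (intro finite_sum_le_infsum) auto
    show "0 \<le> Ir * (VV / 2)" using Ir_pos[OF x0] VV_pos[OF x0] by simp
  qed
  finally show "(\<Sum>x\<in>F. m x * (cmod (f x))\<^sup>2) \<le> Ir * (VV / 2) * Q f" .
qed

lemma coerc: assumes f: "f \<in> L2" shows "NN f / (Ir * VV) \<le> Q f / 2"
proof (cases "D = UNIV")
  case True
  then have "f = (\<lambda>_. 0)" using L2_D[OF f] by auto
  then show ?thesis using Q_nonneg[of f] by (simp add: NN_def)
next
  case False
  then obtain x0 where x0: "x0 \<notin> D" by auto
  have p: "0 < Ir * VV" using Ir_pos[OF x0] VV_pos[OF x0] by simp
  have "NN f \<le> Ir * VV * (Q f / 2)" using poinc[OF f x0] by (simp add: mult_ac)
  then show ?thesis using p by (simp add: divide_le_eq mult_ac)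
qed

definition S :: "('a \<Rightarrow> complex) \<Rightarrow> 'a \<Rightarrow> complex" where
  "S f x = (\<Sum>\<^sub>\<infinity>y. complex_of_real (b x y) * (f x - f y))"

definition H :: "('a \<Rightarrow> complex) \<Rightarrow> 'a \<Rightarrow> complex" where
  "H f x = (if x \<in> D then 0 else S f x / complex_of_real (m x))"

lemma t_le: "(t::real) \<le> 1 + t\<^sup>2"
proof -
  have "0 \<le> (t - 1/2)\<^sup>2" by simp
  then show ?thesis by (simp add: power2_diff power2_eq_square algebra_simps)
qed

lemma b_csumm: "(\<lambda>y. complex_of_real (b x y)) summable_on UNIV"
  using summable_on_of_real[OF b_summ] .

lemma bof_summ: assumes f: "f \<in> L2" shows "(\<lambda>y. complex_of_real (b x y) * f y) summable_on UNIV"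
proof (rule abs_summ_complex)
  show "(\<lambda>y. b x y + b x y * (cmod (f y))\<^sup>2) summable_on UNIV"
    using bsq[OF f, of x] by (intro summable_on_add b_summ) auto
  fix y
  have "cmod (complex_of_real (b x y) * f y) = b x y * cmod (f y)" by (simp add: norm_mult b_nonneg)
  also have "\<dots> \<le> b x y * (1 + (cmod (f y))\<^sup>2)" by (intro mult_left_mono t_le b_nonneg)
  finally show "cmod (complex_of_real (b x y) * f y) \<le> b x y + b x y * (cmod (f y))\<^sup>2" by (simp add: algebra_simps)
qed

lemma S_summ: assumes f: "f \<in> L2" shows "(\<lambda>y. complex_of_real (b x y) * (f x - f y)) summable_on UNIV"
proof -
  have "(\<lambda>y. complex_of_real (b x y) * f x - complex_of_real (b x y) * f y) summable_on UNIV"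
    by (intro summable_on_diff' summable_on_cmult_left b_csumm bof_summ f)
  then show ?thesis by (simp add: right_diff_distrib)
qed

lemma S_diff: assumes f: "f \<in> L2" and g: "g \<in> L2" shows "S (\<lambda>x. f x - g x) x = S f x - S g x"
proof -
  have "S (\<lambda>x. f x - g x) x = (\<Sum>\<^sub>\<infinity>y. complex_of_real (b x y) * (f x - f y) - complex_of_real (b x y) * (g x - g y))"
    unfolding S_def by (intro infsum_cong) (simp add: algebra_simps)
  also have "\<dots> = S f x - S g x" unfolding S_def by (intro infsum_diff' S_summ f g)
  finally show ?thesis .
qed

lemma H_diff: assumes f: "f \<in> L2" and g: "g \<in> L2" shows "H (\<lambda>x. f x - g x) = (\<lambda>x. H f x - H g x)"
  unfolding H_def using S_diff[OF f g] by (auto simp: fun_eq_iff diff_divide_distrib)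

definition q :: "('a \<Rightarrow> complex) \<Rightarrow> 'a \<Rightarrow> real" where "q f x = (\<Sum>\<^sub>\<infinity>y. cc f (x,y))"

lemma q_summ: assumes f: "f \<in> L2" shows "(\<lambda>y. cc f (x,y)) summable_on UNIV"
proof (rule summ_cmp)
  show "(\<lambda>y. 2 * (b x y * (cmod (f x))\<^sup>2) + 2 * (b x y * (cmod (f y))\<^sup>2)) summable_on UNIV"
    using bsq[OF f, of x] by (intro summable_on_add summable_on_cmult_right summable_on_cmult_left b_summ) auto
qed (auto simp: cc_le cc_nonneg)

lemma q_nonneg: "0 \<le> q f x" unfolding q_def using cc_nonneg by (intro infsum_nonneg) auto

lemma Q_eq: assumes f: "f \<in> L2" shows "(\<lambda>x. q f x) summable_on UNIV \<and> Q f = (\<Sum>\<^sub>\<infinity>x. q f x)"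
proof -
  have s: "cc f summable_on Sigma UNIV (\<lambda>_. UNIV)" using cc_summ[OF f] by simp
  have s': "(\<lambda>(x,y). cc f (x,y)) summable_on Sigma UNIV (\<lambda>_. UNIV)" using s by simp
  have "(\<lambda>x. \<Sum>\<^sub>\<infinity>y. cc f (x,y)) summable_on UNIV" using summable_on_Sigma_banach[OF s'] by simp
  moreover have "(\<Sum>\<^sub>\<infinity>x. \<Sum>\<^sub>\<infinity>y. cc f (x,y)) = Q f" using infsum_Sigma_banach[OF s] unfolding Q_def by simp
  ultimately show ?thesis unfolding q_def by simp
qed

lemma S_bound: assumes f: "f \<in> L2" shows "(cmod (S f x))\<^sup>2 \<le> deg x * q f x"
proof -
  define a where "a y = b x y * cmod (f x - f y)" for y
  have na: "cmod (complex_of_real (b x y) * (f x - f y)) = a y" for y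
    unfolding a_def by (simp add: norm_mult b_nonneg)
  have asumm: "a summable_on UNIV"
  proof (rule summ_cmp)
    show "(\<lambda>y. b x y + cc f (x,y)) summable_on UNIV" by (intro summable_on_add b_summ q_summ f)
    fix y
    have "a y \<le> b x y * (1 + (cmod (f x - f y))\<^sup>2)" unfolding a_def by (intro mult_left_mono t_le b_nonneg)
    then show "a y \<le> b x y + cc f (x,y)" by (simp add: cc_def algebra_simps)
    show "0 \<le> a y" unfolding a_def by (simp add: b_nonneg)
  qed
  have "cmod (S f x) \<le> (\<Sum>\<^sub>\<infinity>y. cmod (complex_of_real (b x y) * (f x - f y)))"
    unfolding S_def by (rule Infinite_Sum.norm_infsum_bound) (simp add: na asumm)
  also have "\<dots> = (\<Sum>\<^sub>\<infinity>y. a y)" by (simp add: na)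
  also have "\<dots> \<le> sqrt (deg x * q f x)"
  proof (rule infsum_le_finite_sums[OF asumm])
    fix F :: "'a set" assume F: "finite F"
    have "(\<Sum>y\<in>F. a y)\<^sup>2 = (\<Sum>y\<in>F. sqrt (b x y) * (sqrt (b x y) * cmod (f x - f y)))\<^sup>2"
      unfolding a_def by (simp add: b_nonneg mult.assoc[symmetric])
    also have "\<dots> \<le> (\<Sum>y\<in>F. (sqrt (b x y))\<^sup>2) * (\<Sum>y\<in>F. (sqrt (b x y) * cmod (f x - f y))\<^sup>2)"
      by (rule Cauchy_Schwarz_ineq_sum)
    also have "\<dots> = (\<Sum>y\<in>F. b x y) * (\<Sum>y\<in>F. cc f (x,y))"
      by (simp add: b_nonneg cc_def power_mult_distrib)
    also have "\<dots> \<le> deg x * q f x"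
    proof (rule mult_mono)
      show "(\<Sum>y\<in>F. b x y) \<le> deg x" using sum_le_deg[OF F] by simp
      show "(\<Sum>y\<in>F. cc f (x,y)) \<le> q f x" unfolding q_def using q_summ[OF f] F cc_nonneg
        by (intro finite_sum_le_infsum) auto
      show "0 \<le> deg x" by (rule deg_nonneg)
      show "0 \<le> (\<Sum>y\<in>F. cc f (x,y))" using cc_nonneg by (intro sum_nonneg) auto
    qed
    finally show "sum a F \<le> sqrt (deg x * q f x)" by (rule real_le_rsqrt)
  qed
  finally have "cmod (S f x) \<le> sqrt (deg x * q f x)" .
  then have "(cmod (S f x))\<^sup>2 \<le> (sqrt (deg x * q f x))\<^sup>2" by (intro power_mono) auto
  also have "\<dots> = deg x * q f x" using deg_nonneg q_nonneg by simp
  finally show ?thesis .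
qed

lemma H_bound: assumes f: "f \<in> L2" shows "m x * (cmod (H f x))\<^sup>2 \<le> K * q f x"
proof (cases "x \<in> D")
  case True then show ?thesis using K_nonneg q_nonneg by (simp add: H_def)
next
  case False
  have mx: "0 < m x" by (rule m_pos)
  have "m x * (cmod (H f x))\<^sup>2 = (cmod (S f x))\<^sup>2 / m x"
    using False mx by (simp add: H_def norm_divide power_divide power2_eq_square)
  also have "\<dots> \<le> deg x * q f x / m x" using S_bound[OF f] mx by (simp add: divide_right_mono)
  also have "\<dots> \<le> K * q f x"
  proof -
    have "deg x / m x \<le> K" by (rule deg_div_le)
    then have "deg x / m x * q f x \<le> K * q f x" using q_nonneg by (rule mult_right_mono)
    then show ?thesis by simp
  qed
  finally show ?thesis .
qed

lemma H_L2: assumes f: "f \<in> L2" shows "H f \<in> L2 \<and> NN (H f) \<le> K * Q f"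
proof -
  have s: "(\<lambda>x. K * q f x) summable_on UNIV" using Q_eq[OF f] by (intro summable_on_cmult_right) auto
  have s2: "(\<lambda>x. m x * (cmod (H f x))\<^sup>2) summable_on UNIV"
    by (rule summ_cmp[OF s H_bound[OF f]]) (simp add: m_nonneg)
  have "H f \<in> L2" by (rule L2I[OF _ s2]) (simp add: H_def)
  moreover have "NN (H f) \<le> (\<Sum>\<^sub>\<infinity>x. K * q f x)" unfolding NN_def by (rule infsum_mono[OF s2 s H_bound[OF f]])
  moreover have "(\<Sum>\<^sub>\<infinity>x. K * q f x) = K * Q f" using Q_eq[OF f] by (simp add: infsum_cmult_right')
  ultimately show ?thesis by simp
qed

subsection \<open>Inner product, energy, Green formula\<close>

lemma zcnj: "z * cnj z = (complex_of_real (cmod z))\<^sup>2"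
  by (metis complex_norm_square of_real_power)

lemma inner_summ: assumes f: "f \<in> L2" and g: "g \<in> L2"
  shows "(\<lambda>x. complex_of_real (m x) * f x * cnj (g x)) summable_on UNIV"
proof (rule abs_summ_complex)
  show "(\<lambda>x. m x * (cmod (f x))\<^sup>2 + m x * (cmod (g x))\<^sup>2) summable_on UNIV" by (intro summable_on_add L2_summ f g)
  fix x
  have "cmod (complex_of_real (m x) * f x * cnj (g x)) = m x * (cmod (f x) * cmod (g x))"
    by (simp add: norm_mult m_nonneg)
  also have "\<dots> \<le> m x * ((cmod (f x))\<^sup>2 + (cmod (g x))\<^sup>2)" by (intro mult_left_mono mul_le_sq m_nonneg) auto
  finally show "cmod (complex_of_real (m x) * f x * cnj (g x)) \<le> m x * (cmod (f x))\<^sup>2 + m x * (cmod (g x))\<^sup>2"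
    by (simp add: algebra_simps)
qed

lemma inner_diff_left: assumes f: "f \<in> L2" and g: "g \<in> L2" and h: "h \<in> L2"
  shows "l2_inner m (\<lambda>x. f x - g x) h = l2_inner m f h - l2_inner m g h"
proof -
  have "l2_inner m (\<lambda>x. f x - g x) h = (\<Sum>\<^sub>\<infinity>x. complex_of_real (m x) * f x * cnj (h x) - complex_of_real (m x) * g x * cnj (h x))"
    unfolding l2_inner_def by (intro infsum_cong) (simp add: algebra_simps)
  also have "\<dots> = l2_inner m f h - l2_inner m g h" unfolding l2_inner_def by (intro infsum_diff' inner_summ f g h)
  finally show ?thesis .
qed

lemma inner_mult_left: "l2_inner m (\<lambda>x. c * f x) h = c * l2_inner m f h"
proof -
  have "l2_inner m (\<lambda>x. c * f x) h = (\<Sum>\<^sub>\<infinity>x. c * (complex_of_real (m x) * f x * cnj (h x)))"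
    unfolding l2_inner_def by (intro infsum_cong) (simp add: algebra_simps)
  also have "\<dots> = c * l2_inner m f h" unfolding l2_inner_def by (rule infsum_cmult_right')
  finally show ?thesis .
qed

lemma inner_self: assumes f: "f \<in> L2" shows "l2_inner m f f = complex_of_real (NN f)"
proof -
  have e: "(\<lambda>x. complex_of_real (m x) * f x * cnj (f x)) = (\<lambda>x. complex_of_real (m x * (cmod (f x))\<^sup>2))"
    by (simp add: mult.assoc zcnj)
  have "((\<lambda>x. complex_of_real (m x * (cmod (f x))\<^sup>2)) has_sum complex_of_real (NN f)) UNIV"
    unfolding NN_def by (rule has_sum_of_real) (simp add: L2_summ f)
  then show ?thesis unfolding l2_inner_def e by (rule infsumI)
qed

lemma energy_self: assumes f: "f \<in> L2" shows "energy b f f = complex_of_real (Q f / 2)"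
proof -
  have e: "(\<lambda>(x,y). complex_of_real (b x y) * (f x - f y) * cnj (f x - f y)) = (\<lambda>e. complex_of_real (cc f e))"
    by (auto simp: cc_def mult.assoc zcnj fun_eq_iff simp del: complex_cnj_diff)
  have "((\<lambda>e. complex_of_real (cc f e)) has_sum complex_of_real (Q f)) UNIV"
    unfolding Q_def by (rule has_sum_of_real) (simp add: cc_summ f)
  then have "(\<Sum>\<^sub>\<infinity>(x,y). complex_of_real (b x y) * (f x - f y) * cnj (f x - f y)) = complex_of_real (Q f)"
    unfolding e by (rule infsumI)
  then show ?thesis unfolding energy_def by simp
qed

lemma green: assumes f: "f \<in> L2" and g: "g \<in> L2"
  shows "energy b f g = l2_inner m (H f) g"
proof -
  define R where "R = (\<lambda>(x,y). complex_of_real (b x y) * (f x - f y) * cnj (g x))"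
  define P where "P = (\<lambda>(x,y). complex_of_real (b x y) * (f x - f y) * cnj (g y))"
  have nb: "cmod (complex_of_real (b x y) * (f x - f y) * cnj c) \<le> cc f (x,y) + b x y * (cmod c)\<^sup>2" for x y c
  proof -
    have "cmod (complex_of_real (b x y) * (f x - f y) * cnj c) = b x y * (cmod (f x - f y) * cmod c)"
      by (simp add: norm_mult b_nonneg)
    also have "\<dots> \<le> b x y * ((cmod (f x - f y))\<^sup>2 + (cmod c)\<^sup>2)" by (intro mult_left_mono mul_le_sq b_nonneg) auto
    finally show ?thesis by (simp add: cc_def algebra_simps)
  qed
  have Rs: "R summable_on UNIV"
  proof (rule abs_summ_complex)
    show "(\<lambda>e. cc f e + (case e of (x,y) \<Rightarrow> b x y * (cmod (g x))\<^sup>2)) summable_on UNIV"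
      by (intro summable_on_add cc_summ prod1 f g)
    fix e show "cmod (R e) \<le> cc f e + (case e of (x,y) \<Rightarrow> b x y * (cmod (g x))\<^sup>2)"
      unfolding R_def by (cases e) (simp add: nb)
  qed
  have Ps: "P summable_on UNIV"
  proof (rule abs_summ_complex)
    show "(\<lambda>e. cc f e + (case e of (x,y) \<Rightarrow> b x y * (cmod (g y))\<^sup>2)) summable_on UNIV"
      by (intro summable_on_add cc_summ prod2 f g)
    fix e show "cmod (P e) \<le> cc f e + (case e of (x,y) \<Rightarrow> b x y * (cmod (g y))\<^sup>2)"
      unfolding P_def by (cases e) (simp add: nb)
  qed
  define X where "X = l2_inner m (H f) g"
  have SX: "(\<Sum>\<^sub>\<infinity>x. S f x * cnj (g x)) = X"
    unfolding X_def l2_inner_def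
  proof (rule infsum_cong)
    fix x show "S f x * cnj (g x) = complex_of_real (m x) * H f x * cnj (g x)"
    proof (cases "x \<in> D")
      case True then show ?thesis using L2_D[OF g True] by (simp add: H_def)
    next
      case False then show ?thesis using m_pos[of x] by (simp add: H_def)
    qed
  qed
  have sumR: "infsum R UNIV = X"
  proof -
    have "infsum R UNIV = infsum R (Sigma UNIV (\<lambda>_. UNIV))" by simp
    also have "\<dots> = (\<Sum>\<^sub>\<infinity>x. \<Sum>\<^sub>\<infinity>y. R (x,y))" using infsum_Sigma_banach[of R UNIV "\<lambda>_. UNIV"] Rs by simp
    also have "\<dots> = (\<Sum>\<^sub>\<infinity>x. S f x * cnj (g x))"
      unfolding R_def S_def by (intro infsum_cong) (simp add: infsum_cmult_left')
    finally show ?thesis using SX by simp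
  qed
  have sumP: "infsum P UNIV = - X"
  proof -
    have Ps2: "(\<lambda>(x,y). P (x,y)) summable_on UNIV \<times> UNIV" using Ps by simp
    have "infsum P UNIV = infsum P (Sigma UNIV (\<lambda>_. UNIV))" by simp
    also have "\<dots> = (\<Sum>\<^sub>\<infinity>x. \<Sum>\<^sub>\<infinity>y. P (x,y))" using infsum_Sigma_banach[of P UNIV "\<lambda>_. UNIV"] Ps by simp
    also have "\<dots> = (\<Sum>\<^sub>\<infinity>y. \<Sum>\<^sub>\<infinity>x. P (x,y))" using infsum_swap_banach[OF Ps2] by simp
    also have "\<dots> = (\<Sum>\<^sub>\<infinity>y. - (S f y * cnj (g y)))"
    proof (rule infsum_cong)
      fix y
      have i1: "(\<Sum>\<^sub>\<infinity>x. complex_of_real (b x y) * (f x - f y)) = (\<Sum>\<^sub>\<infinity>x. - (complex_of_real (b y x) * (f y - f x)))"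
        by (intro infsum_cong) (simp add: b_sym algebra_simps)
      have "(\<Sum>\<^sub>\<infinity>x. P (x,y)) = (\<Sum>\<^sub>\<infinity>x. (complex_of_real (b x y) * (f x - f y)) * cnj (g y))"
        unfolding P_def by simp
      also have "\<dots> = (\<Sum>\<^sub>\<infinity>x. complex_of_real (b x y) * (f x - f y)) * cnj (g y)"
        by (rule infsum_cmult_left')
      also have "\<dots> = (\<Sum>\<^sub>\<infinity>x. - (complex_of_real (b y x) * (f y - f x))) * cnj (g y)"
        by (simp only: i1)
      also have "\<dots> = - (S f y * cnj (g y))" unfolding S_def infsum_uminus by simp
      finally show "(\<Sum>\<^sub>\<infinity>x. P (x,y)) = - (S f y * cnj (g y))" .
    qed
    also have "\<dots> = - X" using SX by (simp add: infsum_uminus)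
    finally show ?thesis .
  qed
  have "(\<Sum>\<^sub>\<infinity>(x,y). complex_of_real (b x y) * (f x - f y) * cnj (g x - g y)) = (\<Sum>\<^sub>\<infinity>e. R e - P e)"
    unfolding R_def P_def by (intro infsum_cong) (auto simp: algebra_simps)
  also have "\<dots> = X - (- X)" using infsum_diff'[OF Rs Ps] sumR sumP by simp
  finally show ?thesis unfolding energy_def X_def by simp
qed

lemma inner_zero_imp: assumes h: "h \<in> L2" and z: "\<forall>g\<in>L2. l2_inner m h g = 0"
  shows "h = (\<lambda>_. 0)"
proof
  fix x show "h x = 0"
  proof (cases "x \<in> D")
    case True then show ?thesis using L2_D[OF h] by simp
  next
    case False
    define g where "g y = (if y = x then h x else 0)" for y
    have gL: "g \<in> L2"
    proof (rule L2I)
      show "g y = 0" if "y \<in> D" for y using that False by (auto simp: g_def)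
      show "(\<lambda>y. m y * (cmod (g y))\<^sup>2) summable_on UNIV"
        by (rule finite_nonzero_values_imp_summable_on) (rule finite_subset[of _ "{x}"], auto simp: g_def)
    qed
    have "l2_inner m h g = (\<Sum>\<^sub>\<infinity>y\<in>{x}. complex_of_real (m y) * h y * cnj (g y))"
      unfolding l2_inner_def by (rule infsum_cong_neutral) (auto simp: g_def)
    also have "\<dots> = complex_of_real (m x * (cmod (h x))\<^sup>2)" by (simp add: g_def mult.assoc zcnj)
    finally have "m x * (cmod (h x))\<^sup>2 = 0" using z gL by simp
    then show ?thesis using m_pos[of x] by simp
  qed
qed

lemma dop_eq: assumes f: "f \<in> L2" shows "dirichlet_op b m (- D) f = H f"
  unfolding dirichlet_op_def
proof (rule the_equality)
  show "H f \<in> L2 \<and> (\<forall>g\<in>L2. energy b f g = l2_inner m (H f) g)" using H_L2[OF f] green[OF f] by simp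
  fix h assume a: "h \<in> L2 \<and> (\<forall>g\<in>L2. energy b f g = l2_inner m h g)"
  have hH: "(\<lambda>x. h x - H f x) \<in> L2" using a H_L2[OF f] by (intro L2_diff) auto
  have "\<forall>g\<in>L2. l2_inner m (\<lambda>x. h x - H f x) g = 0"
    using a green[OF f] H_L2[OF f] by (simp add: inner_diff_left)
  then have "(\<lambda>x. h x - H f x) = (\<lambda>_. 0)" by (rule inner_zero_imp[OF hH])
  then show "h = H f" by (simp add: fun_eq_iff)
qed

subsection \<open>Coercivity and the shifted operator\<close>

definition c0 :: real where "c0 = 1 / (Ir * VV)"

lemma coerc2: assumes f: "f \<in> L2" shows "c0 * NN f \<le> Re (l2_inner m (H f) f)"
proof -
  have e: "l2_inner m (H f) f = complex_of_real (Q f / 2)" by (metis green[OF f f] energy_self[OF f])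
  have "Re (l2_inner m (H f) f) = Q f / 2" unfolding e by (simp only: Re_complex_of_real)
  moreover have "c0 * NN f = NN f / (Ir * VV)" unfolding c0_def by simp
  ultimately show ?thesis using coerc[OF f] by linarith
qed

definition A :: "complex \<Rightarrow> ('a \<Rightarrow> complex) \<Rightarrow> 'a \<Rightarrow> complex" where
  "A z f = (\<lambda>x. H f x - z * f x)"

lemma A_L2: "f \<in> L2 \<Longrightarrow> A z f \<in> L2"
  unfolding A_def using H_L2 by (intro L2_diff L2_mult) auto

lemma A_diff: "f \<in> L2 \<Longrightarrow> g \<in> L2 \<Longrightarrow> A z (\<lambda>x. f x - g x) = (\<lambda>x. A z f x - A z g x)"
  unfolding A_def using H_diff by (simp add: fun_eq_iff algebra_simps)

lemma A_re: assumes h: "h \<in> L2" shows "(c0 - Re z) * NN h \<le> Re (l2_inner m (A z h) h)"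
proof -
  have "l2_inner m (A z h) h = l2_inner m (H h) h - z * l2_inner m h h"
    unfolding A_def using H_L2[OF h] h L2_mult[OF h, of z] by (simp add: inner_diff_left inner_mult_left)
  then have "Re (l2_inner m (A z h) h) = Re (l2_inner m (H h) h) - Re z * NN h" using inner_self[OF h] by simp
  then show ?thesis using coerc2[OF h] by (simp add: left_diff_distrib)
qed

definition BB :: "complex \<Rightarrow> real" where "BB z = 8 * K\<^sup>2 + 2 * (cmod z)\<^sup>2 + (c0 - Re z)\<^sup>2 + 1"

lemma A_NN: assumes h: "h \<in> L2" shows "NN (A z h) \<le> BB z * NN h"
proof -
  have "NN (A z h) \<le> 2 * NN (H h) + 2 * NN (\<lambda>x. z * h x)"
    unfolding A_def using H_L2[OF h] L2_mult[OF h] by (intro NN_diff_le) auto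
  also have "NN (H h) \<le> K * (4 * K * NN h)" using H_L2[OF h] Q_bound[OF h] K_nonneg
    by (meson mult_left_mono order_trans)
  also have "NN (\<lambda>x. z * h x) = (cmod z)\<^sup>2 * NN h" by (rule NN_mult)
  finally have "NN (A z h) \<le> (8 * K\<^sup>2 + 2 * (cmod z)\<^sup>2) * NN h" by (simp add: algebra_simps power2_eq_square)
  also have "\<dots> \<le> BB z * NN h" unfolding BB_def using NN_nonneg[of h] by (intro mult_right_mono) auto
  finally show ?thesis .
qed

lemma sq_expand: "(cmod (u - complex_of_real t * v))\<^sup>2 = (cmod u)\<^sup>2 - 2 * t * Re (v * cnj u) + t\<^sup>2 * (cmod v)\<^sup>2"
  by (simp only: cmod_power2) (simp add: power2_eq_square algebra_simps)

lemma NN_expand: assumes u: "u \<in> L2" and v: "v \<in> L2"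
  shows "NN (\<lambda>x. u x - complex_of_real t * v x) = NN u - 2 * t * Re (l2_inner m v u) + t\<^sup>2 * NN v"
proof -
  have sr: "(\<lambda>x. m x * Re (v x * cnj (u x))) summable_on UNIV"
  proof -
    have "(\<lambda>x. Re (complex_of_real (m x) * v x * cnj (u x))) summable_on UNIV"
      using summable_on_Re[OF inner_summ[OF v u]] .
    then show ?thesis by (simp add: mult.assoc)
  qed
  have re: "(\<Sum>\<^sub>\<infinity>x. m x * Re (v x * cnj (u x))) = Re (l2_inner m v u)"
  proof -
    have "(\<Sum>\<^sub>\<infinity>x. m x * Re (v x * cnj (u x))) = (\<Sum>\<^sub>\<infinity>x. Re (complex_of_real (m x) * v x * cnj (u x)))"
      by (simp add: mult.assoc)
    also have "\<dots> = Re (l2_inner m v u)" unfolding l2_inner_def by (rule infsum_Re[OF inner_summ[OF v u]])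
    finally show ?thesis .
  qed
  have "NN (\<lambda>x. u x - complex_of_real t * v x) =
        (\<Sum>\<^sub>\<infinity>x. m x * (cmod (u x))\<^sup>2 - (2 * t) * (m x * Re (v x * cnj (u x))) + t\<^sup>2 * (m x * (cmod (v x))\<^sup>2))"
    unfolding NN_def sq_expand by (intro infsum_cong) (simp add: algebra_simps)
  also have "\<dots> = NN u - (2 * t) * (\<Sum>\<^sub>\<infinity>x. m x * Re (v x * cnj (u x))) + t\<^sup>2 * NN v"
  proof -
    have s1: "(\<lambda>x. m x * (cmod (u x))\<^sup>2) summable_on UNIV" by (rule L2_summ[OF u])
    have s2: "(\<lambda>x. (2 * t) * (m x * Re (v x * cnj (u x)))) summable_on UNIV" by (intro summable_on_cmult_right sr)
    have s3: "(\<lambda>x. t\<^sup>2 * (m x * (cmod (v x))\<^sup>2)) summable_on UNIV" by (intro summable_on_cmult_right L2_summ v)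
    have "(\<Sum>\<^sub>\<infinity>x. m x * (cmod (u x))\<^sup>2 - (2 * t) * (m x * Re (v x * cnj (u x))) + t\<^sup>2 * (m x * (cmod (v x))\<^sup>2))
        = (\<Sum>\<^sub>\<infinity>x. m x * (cmod (u x))\<^sup>2 - (2 * t) * (m x * Re (v x * cnj (u x)))) + (\<Sum>\<^sub>\<infinity>x. t\<^sup>2 * (m x * (cmod (v x))\<^sup>2))"
      by (intro infsum_add summable_on_diff' s1 s2 s3)
    also have "\<dots> = NN u - (\<Sum>\<^sub>\<infinity>x. (2 * t) * (m x * Re (v x * cnj (u x)))) + (\<Sum>\<^sub>\<infinity>x. t\<^sup>2 * (m x * (cmod (v x))\<^sup>2))"
      unfolding NN_def by (simp only: infsum_diff'[OF s1 s2])
    also have "\<dots> = NN u - (2 * t) * (\<Sum>\<^sub>\<infinity>x. m x * Re (v x * cnj (u x))) + t\<^sup>2 * NN v"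
      unfolding NN_def by (simp add: infsum_cmult_right')
    finally show ?thesis .
  qed
  finally show ?thesis unfolding re .
qed

lemma contr: assumes h: "h \<in> L2" and z: "Re z < c0"
  shows "NN (\<lambda>x. h x - complex_of_real ((c0 - Re z) / BB z) * A z h x) \<le> (1 - (c0 - Re z)\<^sup>2 / BB z) * NN h"
proof -
  define a where "a = c0 - Re z"
  define B where "B = BB z"
  define t where "t = a / B"
  have a: "0 < a" unfolding a_def using z by simp
  have "0 \<le> 8 * K\<^sup>2 + 2 * (cmod z)\<^sup>2" by simp
  then have B: "a\<^sup>2 < B" unfolding B_def BB_def a_def by linarith
  have Bp: "0 < B" using B zero_le_power2[of a] by linarith
  have t: "0 \<le> t" unfolding t_def using a Bp by simp
  have "NN (\<lambda>x. h x - complex_of_real t * A z h x) = NN h - 2 * t * Re (l2_inner m (A z h) h) + t\<^sup>2 * NN (A z h)"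
    by (rule NN_expand[OF h A_L2[OF h]])
  also have "\<dots> \<le> NN h - 2 * t * (a * NN h) + t\<^sup>2 * (B * NN h)"
  proof -
    have "2 * t * (a * NN h) \<le> 2 * t * Re (l2_inner m (A z h) h)"
      using A_re[OF h, of z] t unfolding a_def by (intro mult_left_mono) auto
    moreover have "t\<^sup>2 * NN (A z h) \<le> t\<^sup>2 * (B * NN h)"
      using A_NN[OF h, of z] unfolding B_def by (intro mult_left_mono) auto
    ultimately show ?thesis by linarith
  qed
  also have "\<dots> = (1 - a\<^sup>2 / B) * NN h"
    unfolding t_def using Bp by (simp add: field_simps power2_eq_square)
  finally show ?thesis unfolding t_def a_def B_def .
qed

subsection \<open>Transfer to ell2 and surjectivity\<close>

definition Wm :: "('a \<Rightarrow> complex) \<Rightarrow> 'a ell2" where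
  "Wm f = Abs_ell2 (\<lambda>x. complex_of_real (sqrt (m x)) * f x)"

definition Vm :: "'a ell2 \<Rightarrow> 'a \<Rightarrow> complex" where
  "Vm u = (\<lambda>x. if x \<in> D then 0 else rep u x / complex_of_real (sqrt (m x)))"

lemma sq_sqrtm: "(cmod (complex_of_real (sqrt (m x)) * c))\<^sup>2 = m x * (cmod c)\<^sup>2"
  using m_nonneg[of x] by (simp add: norm_mult power_mult_distrib)

lemma sq_divm: "m x * (cmod (c / complex_of_real (sqrt (m x))))\<^sup>2 = (cmod c)\<^sup>2"
proof -
  have mx: "0 < m x" by (rule m_pos)
  have "(cmod (c / complex_of_real (sqrt (m x))))\<^sup>2 = (cmod c)\<^sup>2 / m x"
    using mx by (simp add: norm_divide power_divide)
  then show ?thesis using mx by simp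
qed

lemma rep_W: "f \<in> L2 \<Longrightarrow> rep (Wm f) = (\<lambda>x. complex_of_real (sqrt (m x)) * f x)"
  unfolding Wm_def by (rule Abs_ell2_inverse) (simp add: sqs_def sq_sqrtm L2_summ)

lemma normW: "f \<in> L2 \<Longrightarrow> (norm (Wm f))\<^sup>2 = NN f"
  by (simp add: norm_ell2_sq rep_W sq_sqrtm NN_def)

lemma W_diff: assumes f: "f \<in> L2" and g: "g \<in> L2" shows "Wm f - Wm g = Wm (\<lambda>x. f x - g x)"
proof -
  have "rep (Wm f - Wm g) = rep (Wm (\<lambda>x. f x - g x))"
    using rep_W[OF f] rep_W[OF g] rep_W[OF L2_diff[OF f g]] by (simp add: fun_eq_iff rep_diff algebra_simps)
  then show ?thesis by (simp add: rep_inject)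
qed

lemma V_L2: "Vm u \<in> L2"
proof (rule L2I)
  show "Vm u x = 0" if "x \<in> D" for x using that by (simp add: Vm_def)
  show "(\<lambda>x. m x * (cmod (Vm u x))\<^sup>2) summable_on UNIV"
  proof (rule summ_cmp)
    show "(\<lambda>x. (cmod (rep u x))\<^sup>2) summable_on UNIV" using rep[of u] by (simp add: sqs_def)
    fix x show "m x * (cmod (Vm u x))\<^sup>2 \<le> (cmod (rep u x))\<^sup>2" by (simp add: Vm_def sq_divm)
    show "0 \<le> m x * (cmod (Vm u x))\<^sup>2" by (simp add: m_nonneg)
  qed
qed

lemma VW: assumes f: "f \<in> L2" shows "Vm (Wm f) = f"
proof
  fix x show "Vm (Wm f) x = f x"
  proof (cases "x \<in> D")
    case True then show ?thesis using L2_D[OF f] by (simp add: Vm_def)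
  next
    case False then show ?thesis using m_pos[of x] by (simp add: Vm_def rep_W[OF f])
  qed
qed

lemma NN_V: "NN (\<lambda>x. Vm u x - Vm u' x) \<le> (norm (u - u'))\<^sup>2"
proof -
  have "NN (\<lambda>x. Vm u x - Vm u' x) \<le> (\<Sum>\<^sub>\<infinity>x. (cmod (rep (u - u') x))\<^sup>2)"
    unfolding NN_def
  proof (rule infsum_mono)
    show "(\<lambda>x. m x * (cmod (Vm u x - Vm u' x))\<^sup>2) summable_on UNIV" by (rule L2_summ[OF L2_diff[OF V_L2 V_L2]])
    show "(\<lambda>x. (cmod (rep (u - u') x))\<^sup>2) summable_on UNIV" using rep[of "u - u'"] by (simp add: sqs_def)
    fix x show "m x * (cmod (Vm u x - Vm u' x))\<^sup>2 \<le> (cmod (rep (u - u') x))\<^sup>2"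
    proof (cases "x \<in> D")
      case True then show ?thesis by (simp add: Vm_def)
    next
      case False
      have "Vm u x - Vm u' x = (rep u x - rep u' x) / complex_of_real (sqrt (m x))"
        using False by (simp add: Vm_def diff_divide_distrib)
      then show ?thesis by (simp add: sq_divm rep_diff)
    qed
  qed
  then show ?thesis by (simp add: norm_ell2_sq)
qed

lemma A_surj: assumes z: "Re z < c0" and k: "k \<in> L2" shows "\<exists>g\<in>L2. A z g = k"
proof -
  define a where "a = c0 - Re z"
  define t where "t = a / BB z"
  define q2 where "q2 = 1 - a\<^sup>2 / BB z"
  have a: "0 < a" unfolding a_def using z by simp
  have "0 \<le> 8 * K\<^sup>2 + 2 * (cmod z)\<^sup>2" by simp
  then have B: "a\<^sup>2 < BB z" unfolding BB_def a_def by linarith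
  have Bp: "0 < BB z" using B zero_le_power2[of a] by linarith
  have q2: "0 \<le> q2" "q2 < 1" unfolding q2_def using B Bp a by (auto simp: field_simps)
  have tnz: "t \<noteq> 0" unfolding t_def using a Bp by simp
  define G where "G g = (\<lambda>x. g x - complex_of_real t * (A z g x - k x))" for g
  have GL: "G g \<in> L2" if "g \<in> L2" for g
    unfolding G_def using that k A_L2 by (intro L2_diff L2_mult) auto
  have Gd: "(\<lambda>x. G g1 x - G g2 x) = (\<lambda>x. (g1 x - g2 x) - complex_of_real t * A z (\<lambda>y. g1 y - g2 y) x)"
    if "g1 \<in> L2" "g2 \<in> L2" for g1 g2
    unfolding G_def A_diff[OF that] by (simp add: fun_eq_iff algebra_simps)
  define T where "T u = Wm (G (Vm u))" for u
  have Tc: "dist (T u) (T u') \<le> sqrt q2 * dist u u'" for u u'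
  proof -
    define h where "h = (\<lambda>x. Vm u x - Vm u' x)"
    have hL: "h \<in> L2" unfolding h_def by (intro L2_diff V_L2)
    have "(dist (T u) (T u'))\<^sup>2 = (norm (Wm (\<lambda>x. G (Vm u) x - G (Vm u') x)))\<^sup>2"
      unfolding T_def dist_norm using W_diff[OF GL[OF V_L2] GL[OF V_L2]] by simp
    also have "\<dots> = NN (\<lambda>x. G (Vm u) x - G (Vm u') x)" by (intro normW L2_diff GL V_L2)
    also have "\<dots> = NN (\<lambda>x. h x - complex_of_real t * A z h x)" unfolding Gd[OF V_L2 V_L2] h_def ..
    also have "\<dots> \<le> q2 * NN h" using contr[OF hL z] unfolding t_def q2_def a_def .
    also have "\<dots> \<le> q2 * (norm (u - u'))\<^sup>2" unfolding h_def using q2 NN_V by (intro mult_left_mono) auto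
    also have "\<dots> = (sqrt q2 * dist u u')\<^sup>2" using q2 by (simp add: power_mult_distrib dist_norm)
    finally show ?thesis by (rule power2_le_imp_le) (use q2 in simp)
  qed
  have "\<exists>!u. T u = u"
    by (rule banach_fix_type[of "sqrt q2"]) (use q2 Tc in auto)
  then obtain u where u: "T u = u" by blast
  define g where "g = Vm u"
  have gL: "g \<in> L2" unfolding g_def by (rule V_L2)
  have "G g = g" using u VW[OF GL[OF gL]] unfolding T_def g_def by metis
  then have "\<forall>x. complex_of_real t * (A z g x - k x) = 0" unfolding G_def by (simp add: fun_eq_iff)
  then have "A z g = k" using tnz by (simp add: fun_eq_iff)
  then show ?thesis using gL by blast
qed

lemma main: "\<forall>z\<in>dirichlet_spectrum b m (- D). c0 \<le> Re z"
proof
  fix z assume zs: "z \<in> dirichlet_spectrum b m (- D)"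
  show "c0 \<le> Re z"
  proof (rule ccontr)
    assume "\<not> c0 \<le> Re z"
    then have z: "Re z < c0" by simp
    have inj: "inj_on (A z) L2"
    proof (rule inj_onI)
      fix f g assume f: "f \<in> L2" and g: "g \<in> L2" and e: "A z f = A z g"
      define h where "h = (\<lambda>x. f x - g x)"
      have hL: "h \<in> L2" unfolding h_def by (rule L2_diff[OF f g])
      have Ah: "A z h = (\<lambda>_. 0)" unfolding h_def A_diff[OF f g] e by simp
      have "(c0 - Re z) * NN h \<le> Re (l2_inner m (A z h) h)" by (rule A_re[OF hL])
      also have "\<dots> = 0" unfolding Ah by (simp add: l2_inner_def)
      finally have "NN h \<le> 0" using z NN_nonneg[of h] by (smt (verit) mult_pos_pos)
      then have "h = (\<lambda>_. 0)" by (rule NN_zero_imp[OF hL])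
      then show "f = g" unfolding h_def by (simp add: fun_eq_iff)
    qed
    have img: "A z ` L2 = L2" using A_L2 A_surj[OF z] by blast
    have bA: "bij_betw (A z) L2 L2" unfolding bij_betw_def using inj img by simp
    have "bij_betw (\<lambda>f x. dirichlet_op b m (- D) f x - z * f x) L2 L2"
      using bA by (rule bij_betw_cong[THEN iffD2, rotated]) (simp add: A_def dop_eq)
    then show False using zs unfolding dirichlet_spectrum_def by simp
  qed
qed

end

theorem theorem3p12:
  fixes b :: "'a::countable \<Rightarrow> 'a \<Rightarrow> real" and m :: "'a \<Rightarrow> real" and D :: "'a set"
  assumes "weighted_graph b m" and "gconnected b" and "condB b m" and "condM m"
    and "rel_dense b D"
  shows "\<forall>z\<in>dirichlet_spectrum b m (- D).
           1 / (Inr b (- D) * volsup b m (Inr b (- D))) \<le> Re z"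
proof -
  interpret wgraph b m D using assms by unfold_locales
  show ?thesis using main unfolding c0_def .
qed


end
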